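(* Let $X$ be one of the following Banach spaces: (i) $L^1([0,1])$; (ii) $C([0,1])$; (iii) $c_0$; (iv) the space $\ell^2$ equipped with the norm $|x|=\max\{\|x\|_\infty, \|x\|_2/\sqrt2\}$. Then there exist a nontrivial weakly compact convex subset $K$ of $X$ and a mapping $T:K\to K$ such that $T$ is not a Kannan mapping, $T$ is an orbitally Kannan mapping which diminishes the radius of orbits, and $T$ has no fixed point.
   Context: Nontrivial means containing more than one point; $\|\cdot\|_\infty$ and $\|\cdot\|_2$ are the usual sup and Euclidean norms on $\ell^2$. For $x\in X$, $A\subseteq X$: $r_x(A)=\sup\{\|x-y\|:y\in A\}$; $O_T(x)=\{x,Tx,T^2x,\dots\}$. $T$ is Kannan if $\|Tx-Ty\|\le\frac12(\|x-Tx\|+\|y-Ty\|)$ for all $x,y\in K$; orbitally Kannan if $\|Tx-Ty\|\le\frac12(r_x(O_T(x))+r_y(O_T(y)))$ for all $x,y\in K$; diminishes the radius of orbits if $r_{Tx}(O_T(Tx))\le r_x(O_T(x))$ for all $x\in K$. *)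

theory Defs
  imports "HOL-Analysis.Analysis" "HOL-Library.Function_Algebras"
begin

instantiation "fun" :: (type, real_vector) real_vector
begin
definition scaleR_fun :: "real \<Rightarrow> ('a \<Rightarrow> 'b) \<Rightarrow> 'a \<Rightarrow> 'b"
  where "scaleR_fun r f = (\<lambda>x. r *\<^sub>R f x)"
instance
  by standard (auto simp: scaleR_fun_def plus_fun_def fun_eq_iff scaleR_add_right scaleR_add_left)
end

lemma scaleR_fun_apply [simp]: "(r *\<^sub>R f) x = r *\<^sub>R f x"
  by (simp add: scaleR_fun_def)

definition l1rel :: "(real \<Rightarrow> real) \<Rightarrow> (real \<Rightarrow> real) \<Rightarrow> bool" where
  "l1rel f g \<longleftrightarrow> integrable (lebesgue_on {0..1}) f \<and> integrable (lebesgue_on {0..1}) g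
      \<and> (AE t in lebesgue_on {0..1}. f t = g t)"

lemma l1rel_part_equivp: "part_equivp l1rel"
proof (rule part_equivpI)
  show "\<exists>x. l1rel x x" by (rule exI[of _ "\<lambda>_. 0"]) (simp add: l1rel_def)
  show "symp l1rel" unfolding symp_def l1rel_def by (auto elim: AE_mp)
  show "transp l1rel" unfolding transp_def l1rel_def by (auto elim!: AE_mp)
qed

quotient_type L1 = "real \<Rightarrow> real" / partial: l1rel
  by (rule l1rel_part_equivp)

instantiation L1 :: real_vector
begin
lift_definition zero_L1 :: L1 is "\<lambda>_. 0" by (simp add: l1rel_def)
lift_definition plus_L1 :: "L1 \<Rightarrow> L1 \<Rightarrow> L1" is "\<lambda>f g t. f t + g t"
  unfolding l1rel_def by (auto elim!: AE_mp)
lift_definition uminus_L1 :: "L1 \<Rightarrow> L1" is "\<lambda>f t. - f t"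
  unfolding l1rel_def by (auto elim!: AE_mp)
lift_definition minus_L1 :: "L1 \<Rightarrow> L1 \<Rightarrow> L1" is "\<lambda>f g t. f t - g t"
  unfolding l1rel_def by (auto elim!: AE_mp)
lift_definition scaleR_L1 :: "real \<Rightarrow> L1 \<Rightarrow> L1" is "\<lambda>r f t. r * f t"
  unfolding l1rel_def by (auto elim!: AE_mp)
instance
  by standard (transfer; auto simp: l1rel_def algebra_simps)+
end

lift_definition norm_L1 :: "L1 \<Rightarrow> real" is "\<lambda>f. integral\<^sup>L (lebesgue_on {0..1}) (\<lambda>t. \<bar>f t\<bar>)"
  unfolding l1rel_def by (auto intro: integral_cong_AE)

definition C01 :: "(real \<Rightarrow> real) set" where
  "C01 = {f. continuous_on {0..1} f \<and> (\<forall>t. t \<notin> {0..1} \<longrightarrow> f t = 0)}"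
definition norm_C01 :: "(real \<Rightarrow> real) \<Rightarrow> real" where
  "norm_C01 f = Sup ((\<lambda>t. \<bar>f t\<bar>) ` {0..1})"

definition c0 :: "(nat \<Rightarrow> real) set" where
  "c0 = {x. x \<longlonglongrightarrow> 0}"
definition sup_norm_seq :: "(nat \<Rightarrow> real) \<Rightarrow> real" where
  "sup_norm_seq x = Sup (range (\<lambda>n. \<bar>x n\<bar>))"

definition l2 :: "(nat \<Rightarrow> real) set" where
  "l2 = {x. summable (\<lambda>n. (x n)\<^sup>2)}"
definition l2_norm_seq :: "(nat \<Rightarrow> real) \<Rightarrow> real" where
  "l2_norm_seq x = sqrt (\<Sum>n. (x n)\<^sup>2)"
definition norm_l2_new :: "(nat \<Rightarrow> real) \<Rightarrow> real" where
  "norm_l2_new x = max (sup_norm_seq x) (l2_norm_seq x / sqrt 2)"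

definition bdd_lin_functionals :: "'a::real_vector set \<Rightarrow> ('a \<Rightarrow> real) \<Rightarrow> ('a \<Rightarrow> real) set" where
  "bdd_lin_functionals V N =
     {f. (\<forall>x\<in>V. \<forall>y\<in>V. f (x + y) = f x + f y) \<and> (\<forall>x\<in>V. \<forall>c. f (c *\<^sub>R x) = c * f x)
         \<and> (\<exists>C. \<forall>x\<in>V. \<bar>f x\<bar> \<le> C * N x)}"

definition weak_topology :: "'a::real_vector set \<Rightarrow> ('a \<Rightarrow> real) \<Rightarrow> 'a topology" where
  "weak_topology V N =
     pullback_topology V (\<lambda>x. restrict (\<lambda>f. f x) (bdd_lin_functionals V N))
       (product_topology (\<lambda>_. euclideanreal) (bdd_lin_functionals V N))"

definition orbit :: "('a \<Rightarrow> 'a) \<Rightarrow> 'a \<Rightarrow> 'a set" where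
  "orbit T x = range (\<lambda>n. (T ^^ n) x)"

definition radius :: "('a::real_vector \<Rightarrow> real) \<Rightarrow> 'a \<Rightarrow> 'a set \<Rightarrow> real" where
  "radius N x A = Sup ((\<lambda>y. N (x - y)) ` A)"

definition kannan :: "('a::real_vector \<Rightarrow> real) \<Rightarrow> 'a set \<Rightarrow> ('a \<Rightarrow> 'a) \<Rightarrow> bool" where
  "kannan N K T \<longleftrightarrow> (\<forall>x\<in>K. \<forall>y\<in>K. N (T x - T y) \<le> (N (x - T x) + N (y - T y)) / 2)"

definition orbitally_kannan :: "('a::real_vector \<Rightarrow> real) \<Rightarrow> 'a set \<Rightarrow> ('a \<Rightarrow> 'a) \<Rightarrow> bool" where
  "orbitally_kannan N K T \<longleftrightarrow>
     (\<forall>x\<in>K. \<forall>y\<in>K. N (T x - T y) \<le> (radius N x (orbit T x) + radius N y (orbit T y)) / 2)"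

definition diminishes_orbit_radius :: "('a::real_vector \<Rightarrow> real) \<Rightarrow> 'a set \<Rightarrow> ('a \<Rightarrow> 'a) \<Rightarrow> bool" where
  "diminishes_orbit_radius N K T \<longleftrightarrow>
     (\<forall>x\<in>K. radius N (T x) (orbit T (T x)) \<le> radius N x (orbit T x))"

definition has_fpf_orbitally_kannan_example :: "'a::real_vector set \<Rightarrow> ('a \<Rightarrow> real) \<Rightarrow> bool" where
  "has_fpf_orbitally_kannan_example V N \<longleftrightarrow>
     (\<exists>K T. K \<subseteq> V \<and> (\<exists>x\<in>K. \<exists>y\<in>K. x \<noteq> y) \<and> convex K \<and> compactin (weak_topology V N) K
        \<and> T ` K \<subseteq> K \<and> \<not> kannan N K T \<and> orbitally_kannan N K T
        \<and> diminishes_orbit_radius N K T \<and> (\<forall>x\<in>K. T x \<noteq> x))"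

end

theory Submission
  imports Defs
begin

definition Simp :: "(nat \<Rightarrow> real) set" where
  "Simp = {t. (\<forall>n. 0 \<le> t n) \<and> (\<forall>M. (\<Sum>n<M. t n) \<le> 1)}"

abbreviation PT :: "(nat \<Rightarrow> real) topology" where
  "PT \<equiv> product_topology (\<lambda>_. euclideanreal) UNIV"

lemma Simp_le1: "t \<in> Simp \<Longrightarrow> t n \<le> 1"
proof -
  assume t: "t \<in> Simp"
  have "t n \<le> (\<Sum>k<Suc n. t k)"
    by (rule member_le_sum) (use t in \<open>auto simp: Simp_def\<close>)
  also have "\<dots> \<le> 1" using t unfolding Simp_def by blast
  finally show ?thesis .
qed

lemma Simp_compact: "compactin PT Simp"
proof (rule closed_compactin)
  show "compactin PT (PiE UNIV (\<lambda>_. {0..1}))"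
    by (simp add: compactin_PiE)
  show "Simp \<subseteq> PiE UNIV (\<lambda>_. {0..1})"
    using Simp_le1 by (auto simp: Simp_def)
  have 1: "closedin PT {t \<in> topspace PT. t n \<in> {0..}}" for n
    by (intro closedin_continuous_map_preimage[where Y=euclideanreal] continuous_map_product_projection) auto
  have 2: "closedin PT {t \<in> topspace PT. (\<Sum>n<M. t n) \<in> {..1}}" for M
    by (intro closedin_continuous_map_preimage[where Y=euclideanreal] continuous_map_sum continuous_map_product_projection) auto
  have "Simp = (\<Inter>n. {t \<in> topspace PT. t n \<in> {0..}}) \<inter> (\<Inter>M. {t \<in> topspace PT. (\<Sum>n<M. t n) \<in> {..1}})"
    by (auto simp: Simp_def)
  then show "closedin PT Simp"
  proof -
    have "closedin PT (\<Inter>n. {t \<in> topspace PT. t n \<in> {0..}})"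
      using 1 by (intro closedin_Inter) auto
    moreover have "closedin PT (\<Inter>M. {t \<in> topspace PT. (\<Sum>n<M. t n) \<in> {..1}})"
      using 2 by (intro closedin_Inter) auto
    ultimately show ?thesis unfolding \<open>Simp = _\<close> by (rule closedin_Int)
  qed
qed

lemma compactin_weak_image:
  assumes cpt: "compactin X S" and gV: "g ` S \<subseteq> V"
    and cont: "\<And>\<phi>. \<phi> \<in> bdd_lin_functionals V N \<Longrightarrow> continuous_map (subtopology X S) euclideanreal (\<lambda>t. \<phi> (g t))"
  shows "compactin (weak_topology V N) (g ` S)"
proof -
  let ?B = "bdd_lin_functionals V N"
  have "continuous_map (subtopology X S) (weak_topology V N) g"
    unfolding weak_topology_def
  proof (rule continuous_map_pullback')
    show "continuous_map (subtopology X S) (product_topology (\<lambda>_. euclideanreal) ?B)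
            ((\<lambda>x. restrict (\<lambda>f. f x) ?B) \<circ> g)"
      unfolding continuous_map_componentwise
    proof
      show "((\<lambda>x. restrict (\<lambda>f. f x) ?B) \<circ> g) ` topspace (subtopology X S) \<subseteq> extensional ?B"
        by auto
      show "\<forall>k\<in>?B. continuous_map (subtopology X S) euclideanreal (\<lambda>x. ((\<lambda>x. restrict (\<lambda>f. f x) ?B) \<circ> g) x k)"
      proof
        fix k assume k: "k \<in> ?B"
        have "continuous_map (subtopology X S) euclideanreal (\<lambda>t. k (g t))" by (rule cont[OF k])
        then show "continuous_map (subtopology X S) euclideanreal (\<lambda>x. ((\<lambda>x. restrict (\<lambda>f. f x) ?B) \<circ> g) x k)"
          using k by simp
      qed
    qed
    show "topspace (subtopology X S) \<subseteq> g -` V" using gV by auto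
  qed
  moreover have "compactin (subtopology X S) S"
    using cpt by (simp add: compactin_subtopology)
  ultimately show ?thesis by (metis image_compactin)
qed

lemma cont_real_iff:
  "continuous_map X euclideanreal f \<longleftrightarrow>
    (\<forall>x\<in>topspace X. \<forall>\<epsilon>>0. \<exists>U. openin X U \<and> x \<in> U \<and> (\<forall>y\<in>U. \<bar>f y - f x\<bar> < \<epsilon>))"
  using Met_TC.continuous_map_to_metric[of X f]
  by (simp add: dist_real_def abs_minus_commute)

lemma bdd_lin_sum:
  assumes phi: "\<phi> \<in> bdd_lin_functionals V N"
    and add: "\<And>x y. x \<in> V \<Longrightarrow> y \<in> V \<Longrightarrow> x + y \<in> V" and z: "0 \<in> V"
    and F: "finite F" and w: "\<And>k. k \<in> F \<Longrightarrow> w k \<in> V"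
  shows "(\<Sum>k\<in>F. w k) \<in> V \<and> \<phi> (\<Sum>k\<in>F. w k) = (\<Sum>k\<in>F. \<phi> (w k))"
  using F w
proof (induction F rule: finite_induct)
  case empty
  have "\<phi> (0 *\<^sub>R 0) = 0 * \<phi> 0" using phi z unfolding bdd_lin_functionals_def by blast
  then show ?case using z by simp
next
  case (insert x F)
  then show ?case using phi add by (auto simp: bdd_lin_functionals_def)
qed

lemma bdd_lin_bound:
  assumes phi: "\<phi> \<in> bdd_lin_functionals V N" and N0: "\<And>x. x \<in> V \<Longrightarrow> 0 \<le> N x"
  obtains C where "C \<ge> 0" "\<And>x. x \<in> V \<Longrightarrow> \<bar>\<phi> x\<bar> \<le> C * N x"
proof -
  obtain C where C: "\<And>x. x \<in> V \<Longrightarrow> \<bar>\<phi> x\<bar> \<le> C * N x"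
    using phi unfolding bdd_lin_functionals_def by blast
  have "\<bar>\<phi> x\<bar> \<le> max C 0 * N x" if "x \<in> V" for x
  proof -
    have "C * N x \<le> max C 0 * N x" using N0[OF that] by (intro mult_right_mono) auto
    then show ?thesis using C[OF that] by linarith
  qed
  then show ?thesis using that[of "max C 0"] by auto
qed

lemma weakly_null:
  assumes phi: "\<phi> \<in> bdd_lin_functionals V N"
    and add: "\<And>x y. x \<in> V \<Longrightarrow> y \<in> V \<Longrightarrow> x + y \<in> V" and z: "0 \<in> V"
    and N0: "\<And>x. x \<in> V \<Longrightarrow> 0 \<le> N x"
    and v: "\<And>n. v n \<in> V"
    and h3: "\<And>F. finite F \<Longrightarrow> N (\<Sum>k\<in>F. v k) \<le> c * sqrt (card F)"
  shows "(\<lambda>n. \<phi> (v n)) \<longlonglongrightarrow> 0"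
proof (rule ccontr)
  obtain C where C0: "C \<ge> 0" and C: "\<And>x. x \<in> V \<Longrightarrow> \<bar>\<phi> x\<bar> \<le> C * N x"
    using bdd_lin_bound[OF phi N0] by blast
  assume "\<not> (\<lambda>n. \<phi> (v n)) \<longlonglongrightarrow> 0"
  then obtain \<epsilon> where e: "\<epsilon> > 0" and ev: "\<forall>M. \<exists>n\<ge>M. \<epsilon> \<le> \<bar>\<phi> (v n)\<bar>"
    unfolding LIMSEQ_iff by (auto simp: not_less)
  have inf: "infinite {n. \<epsilon> \<le> \<bar>\<phi> (v n)\<bar>}"
    using ev unfolding infinite_nat_iff_unbounded_le by auto
  have "{n. \<epsilon> \<le> \<bar>\<phi> (v n)\<bar>} = {n. \<epsilon> \<le> 1 * \<phi> (v n)} \<union> {n. \<epsilon> \<le> (-1) * \<phi> (v n)}"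
    by auto
  then obtain \<sigma> :: real where sig: "\<bar>\<sigma>\<bar> = 1" and J: "infinite {n. \<epsilon> \<le> \<sigma> * \<phi> (v n)}"
    using inf by (metis abs_1 abs_minus_cancel infinite_Un)
  define R where "R = C * \<bar>c\<bar> / \<epsilon>"
  define m where "m = nat \<lceil>R^2\<rceil> + 1"
  have mR: "real m > R^2" unfolding m_def by linarith
  obtain F where F: "F \<subseteq> {n. \<epsilon> \<le> \<sigma> * \<phi> (v n)}" "finite F" "card F = m"
    using infinite_arbitrarily_large[OF J] by blast
  have s: "(\<Sum>k\<in>F. v k) \<in> V \<and> \<phi> (\<Sum>k\<in>F. v k) = (\<Sum>k\<in>F. \<phi> (v k))"
    by (rule bdd_lin_sum[OF phi add z F(2) v])
  have "real m * \<epsilon> \<le> (\<Sum>k\<in>F. \<sigma> * \<phi> (v k))"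
    using sum_bounded_below[of F \<epsilon> "\<lambda>k. \<sigma> * \<phi> (v k)"] F by auto
  also have "\<dots> = \<sigma> * \<phi> (\<Sum>k\<in>F. v k)" using s by (simp add: sum_distrib_left)
  also have "\<dots> \<le> \<bar>\<phi> (\<Sum>k\<in>F. v k)\<bar>" using sig abs_ge_self[of "\<sigma> * \<phi> (\<Sum>k\<in>F. v k)"] by (simp add: abs_mult)
  also have "\<dots> \<le> C * N (\<Sum>k\<in>F. v k)" using C s by blast
  also have "\<dots> \<le> C * (\<bar>c\<bar> * sqrt (real m))"
  proof -
    have "N (\<Sum>k\<in>F. v k) \<le> c * sqrt (card F)" by (rule h3[OF F(2)])
    also have "\<dots> \<le> \<bar>c\<bar> * sqrt (real m)" using F(3)
      by (simp add: mult_right_mono)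
    finally show ?thesis using C0 by (intro mult_left_mono) auto
  qed
  finally have 1: "real m * \<epsilon> \<le> C * (\<bar>c\<bar> * sqrt (real m))" .
  have m0: "real m > 0" using mR by (metis zero_le_power2 le_less_trans)
  have "sqrt (real m) * sqrt (real m) = real m" by simp
  then have "sqrt (real m) * (sqrt (real m) * \<epsilon>) \<le> sqrt (real m) * (C * \<bar>c\<bar>)"
    using 1 by (simp add: algebra_simps)
  then have "sqrt (real m) * \<epsilon> \<le> C * \<bar>c\<bar>"
    using m0 by (simp add: mult_le_cancel_left)
  then have "sqrt (real m) \<le> R" unfolding R_def using e by (simp add: field_simps)
  then have "real m \<le> R^2"
    by (metis m0 less_imp_le power2_le_imp_le real_sqrt_ge_zero real_sqrt_pow2 power_mono)
  then show False using mR by simp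
qed

lemma cont_series:
  assumes phi: "\<phi> \<in> bdd_lin_functionals V N"
    and add: "\<And>x y. x \<in> V \<Longrightarrow> y \<in> V \<Longrightarrow> x + y \<in> V"
    and scl: "\<And>r x. x \<in> V \<Longrightarrow> r *\<^sub>R x \<in> V" and z: "0 \<in> V"
    and N0: "\<And>x. x \<in> V \<Longrightarrow> 0 \<le> N x"
    and v: "\<And>n. v n \<in> V"
    and g1: "\<And>t. t \<in> Simp \<Longrightarrow> g t \<in> V"
    and h2: "\<And>t. t \<in> Simp \<Longrightarrow> (\<lambda>M. N (g t - (\<Sum>n<M. t n *\<^sub>R v n))) \<longlonglongrightarrow> 0"
    and a0: "(\<lambda>n. \<phi> (v n)) \<longlonglongrightarrow> 0"
  shows "continuous_map (subtopology PT Simp) euclideanreal (\<lambda>t. \<phi> (g t))"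
proof -
  obtain C where C0: "C \<ge> 0" and C: "\<And>x. x \<in> V \<Longrightarrow> \<bar>\<phi> x\<bar> \<le> C * N x"
    using bdd_lin_bound[OF phi N0] by blast
  define a where "a n = \<phi> (v n)" for n
  define s where "s t M = (\<Sum>n<M. t n * a n)" for t :: "nat \<Rightarrow> real" and M
  have lin: "\<phi> (x + y) = \<phi> x + \<phi> y" "\<phi> (r *\<^sub>R x) = r * \<phi> x" if "x \<in> V" "y \<in> V" for x y r
    using phi that unfolding bdd_lin_functionals_def by blast+
  have psum: "(\<Sum>n<M. t n *\<^sub>R v n) \<in> V \<and> \<phi> (\<Sum>n<M. t n *\<^sub>R v n) = s t M" for t M
    using bdd_lin_sum[OF phi add z, of "{..<M}" "\<lambda>n. t n *\<^sub>R v n"] v scl lin(2)[OF v v]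
    by (simp add: s_def a_def)
  have conv: "(s t) \<longlonglongrightarrow> \<phi> (g t)" if t: "t \<in> Simp" for t
  proof -
    have "(\<lambda>M. \<phi> (g t) - s t M) \<longlonglongrightarrow> 0"
    proof (rule Lim_null_comparison)
      show "(\<lambda>M. C * N (g t - (\<Sum>n<M. t n *\<^sub>R v n))) \<longlonglongrightarrow> 0"
        using tendsto_mult_right_zero[OF h2[OF t], of C] by simp
      show "\<forall>\<^sub>F M in sequentially. norm (\<phi> (g t) - s t M) \<le> C * N (g t - (\<Sum>n<M. t n *\<^sub>R v n))"
      proof (intro always_eventually allI)
        fix M
        let ?p = "\<Sum>n<M. t n *\<^sub>R v n"
        have pV: "?p \<in> V" using psum by blast
        have "g t - ?p = g t + (-1) *\<^sub>R ?p" by simp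
        moreover have "(-1) *\<^sub>R ?p \<in> V" using scl pV by blast
        ultimately have "\<phi> (g t - ?p) = \<phi> (g t) - s t M"
          using lin(2)[OF pV pV, of "-1"] lin(1)[OF g1[OF t], of "(-1) *\<^sub>R ?p"] psum by simp
        moreover have "g t - ?p \<in> V" using add[OF g1[OF t] \<open>(-1) *\<^sub>R ?p \<in> V\<close>] by simp
        ultimately show "norm (\<phi> (g t) - s t M) \<le> C * N (g t - ?p)"
          using C by fastforce
      qed
    qed
    then have "(\<lambda>M. \<phi> (g t) - (\<phi> (g t) - s t M)) \<longlonglongrightarrow> \<phi> (g t) - 0"
      by (intro tendsto_diff tendsto_const)
    then show ?thesis by simp
  qed
  have unif: "\<exists>M. \<forall>t\<in>Simp. \<bar>\<phi> (g t) - s t M\<bar> \<le> \<epsilon>" if e: "\<epsilon> > 0" for \<epsilon>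
  proof -
    obtain M where M: "\<And>n. n \<ge> M \<Longrightarrow> \<bar>a n\<bar> < \<epsilon>"
      using a0 e unfolding LIMSEQ_iff a_def by force
    have "\<bar>\<phi> (g t) - s t M\<bar> \<le> \<epsilon>" if t: "t \<in> Simp" for t
    proof (rule LIMSEQ_le_const2)
      show "(\<lambda>M'. \<bar>s t M' - s t M\<bar>) \<longlonglongrightarrow> \<bar>\<phi> (g t) - s t M\<bar>"
        by (intro tendsto_intros conv t)
      show "\<exists>N. \<forall>M'\<ge>N. \<bar>s t M' - s t M\<bar> \<le> \<epsilon>"
      proof (intro exI allI impI)
        fix M' assume M': "M' \<ge> M"
        have "s t M' = s t M + (\<Sum>n\<in>{M..<M'}. t n * a n)"
          unfolding s_def lessThan_atLeast0 using M' by (simp add: sum.atLeastLessThan_concat)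
        then have "\<bar>s t M' - s t M\<bar> = \<bar>\<Sum>n\<in>{M..<M'}. t n * a n\<bar>" by simp
        also have "\<dots> \<le> (\<Sum>n\<in>{M..<M'}. \<bar>t n * a n\<bar>)" by (rule sum_abs)
        also have "\<dots> \<le> (\<Sum>n\<in>{M..<M'}. t n * \<epsilon>)"
        proof (rule sum_mono)
          fix n assume "n \<in> {M..<M'}"
          then have "\<bar>a n\<bar> \<le> \<epsilon>" using M by (simp add: less_imp_le)
          moreover have "t n \<ge> 0" using t by (simp add: Simp_def)
          ultimately show "\<bar>t n * a n\<bar> \<le> t n * \<epsilon>" by (simp add: abs_mult mult_left_mono)
        qed
        also have "\<dots> = (\<Sum>n\<in>{M..<M'}. t n) * \<epsilon>" by (simp add: sum_distrib_right)
        also have "\<dots> \<le> 1 * \<epsilon>"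
        proof (rule mult_right_mono)
          have "(\<Sum>n\<in>{M..<M'}. t n) \<le> (\<Sum>n<M'. t n)"
            using t by (intro sum_mono2) (auto simp: Simp_def)
          also have "\<dots> \<le> 1" using t by (simp add: Simp_def)
          finally show "(\<Sum>n\<in>{M..<M'}. t n) \<le> 1" .
        qed (use e in auto)
        finally show "\<bar>s t M' - s t M\<bar> \<le> \<epsilon>" by simp
      qed
    qed
    then show ?thesis by blast
  qed
  have pcont: "continuous_map PT euclideanreal (\<lambda>t. t n * a n)" for n
    by (rule continuous_map_real_mult_right) (rule continuous_map_product_projection, simp)
  have scont: "continuous_map (subtopology PT Simp) euclideanreal (\<lambda>t. s t M)" for M
    unfolding s_def
    by (rule continuous_map_from_subtopology, rule continuous_map_sum) (use pcont in auto)
  show ?thesis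
    unfolding cont_real_iff
  proof (intro ballI allI impI)
    fix x \<epsilon> assume x: "x \<in> topspace (subtopology PT Simp)" and e: "(\<epsilon>::real) > 0"
    obtain M where M: "\<And>t. t \<in> Simp \<Longrightarrow> \<bar>\<phi> (g t) - s t M\<bar> \<le> \<epsilon>/3"
      using unif[of "\<epsilon>/3"] e by auto
    have e3: "\<epsilon>/3 > 0" using e by simp
    have "\<exists>U. openin (subtopology PT Simp) U \<and> x \<in> U \<and> (\<forall>y\<in>U. \<bar>s y M - s x M\<bar> < \<epsilon>/3)"
      using scont[of M, unfolded cont_real_iff] x e3 by blast
    then obtain U where U: "openin (subtopology PT Simp) U" "x \<in> U" "\<And>y. y \<in> U \<Longrightarrow> \<bar>s y M - s x M\<bar> < \<epsilon>/3"
      by blast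
    have xS: "x \<in> Simp" using x by simp
    show "\<exists>U. openin (subtopology PT Simp) U \<and> x \<in> U \<and> (\<forall>y\<in>U. \<bar>\<phi> (g y) - \<phi> (g x)\<bar> < \<epsilon>)"
    proof (intro exI conjI ballI)
      fix y assume y: "y \<in> U"
      have yS: "y \<in> Simp" using openin_subset[OF U(1)] y by auto
      show "\<bar>\<phi> (g y) - \<phi> (g x)\<bar> < \<epsilon>"
        using M[OF xS] M[OF yS] U(3)[OF y] by linarith
    qed (use U in blast)+
  qed
qed

lemma example_from_seq:
  fixes u :: "nat \<Rightarrow> 'a::real_vector"
  assumes KV: "K \<subseteq> V" and cvx: "convex K" and cpt: "compactin (weak_topology V N) K"
    and uK: "\<And>n. u n \<in> K" and inj: "inj u"
    and d1: "\<And>i j. N (u i - u j) \<le> 1"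
    and d2: "\<And>x \<epsilon> M. x \<in> K \<Longrightarrow> \<epsilon> > 0 \<Longrightarrow> \<exists>m\<ge>M. N (x - u m) > 1 - \<epsilon>"
    and d3: "\<And>x. x \<in> K \<Longrightarrow> \<exists>B. \<forall>m. N (x - u m) \<le> B"
    and xa: "xa \<in> K" "xa \<notin> range u" "N (xa - u 0) < N (u 0 - u 1)"
  shows "has_fpf_orbitally_kannan_example V N"
proof -
  define T where "T x = (if x \<in> range u then u (Suc (inv u x)) else u 0)" for x
  have Tu: "T (u n) = u (Suc n)" for n unfolding T_def using inj by simp
  have Tr: "T x \<in> range u" for x unfolding T_def by auto
  have iter_u: "(T^^k) (u n) = u (n + k)" for k n
    by (induction k) (auto simp: Tu)
  have iter_out: "(T^^Suc k) x = u k" if "x \<notin> range u" for x k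
  proof -
    have "(T^^Suc k) x = (T^^k) (T x)" by (simp add: funpow_Suc_right del: funpow.simps)
    also have "T x = u 0" using that unfolding T_def by simp
    finally show ?thesis using iter_u[of k 0] by simp
  qed
  have orbit_sub: "orbit T x \<subseteq> insert x (range u)" for x
  proof
    fix y assume "y \<in> orbit T x"
    then obtain k where y: "y = (T^^k) x" unfolding orbit_def by auto
    show "y \<in> insert x (range u)"
    proof (cases "x \<in> range u")
      case True
      then obtain n where "x = u n" by auto
      then show ?thesis using y iter_u by auto
    next
      case False
      show ?thesis
      proof (cases k)
        case 0 then show ?thesis using y by simp
      next
        case (Suc k') then show ?thesis using y iter_out[OF False] by auto
      qed
    qed
  qed
  have orbit_tail: "\<exists>M0. \<forall>m\<ge>M0. u m \<in> orbit T x" for x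
  proof (cases "x \<in> range u")
    case True
    then obtain n where n: "x = u n" by auto
    have "u m \<in> orbit T x" if "m \<ge> n" for m
      unfolding orbit_def n using iter_u[of "m - n" n] that by (metis le_add_diff_inverse rangeI)
    then show ?thesis by blast
  next
    case False
    then have "u m \<in> orbit T x" for m unfolding orbit_def using iter_out[OF False, of m] by (metis rangeI)
    then show ?thesis by auto
  qed
  have bdd: "bdd_above ((\<lambda>y. N (x - y)) ` orbit T x)" if x: "x \<in> K" for x
  proof -
    obtain B where B: "\<And>m. N (x - u m) \<le> B" using d3[OF x] by blast
    have "\<forall>z\<in>(\<lambda>y. N (x - y)) ` orbit T x. z \<le> max (N (x - x)) B"
    proof
      fix z assume "z \<in> (\<lambda>y. N (x - y)) ` orbit T x"
      then obtain y where y: "y \<in> orbit T x" "z = N (x - y)" by blast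
      then have "y = x \<or> y \<in> range u" using orbit_sub[of x] by blast
      then show "z \<le> max (N (x - x)) B" using y(2) B by (metis max.cobounded1 max.coboundedI2 rangeE)
    qed
    then show ?thesis unfolding bdd_above_def by blast
  qed
  have orbit_ne: "orbit T x \<noteq> {}" for x unfolding orbit_def by auto
  have rad_ge: "radius N x (orbit T x) \<ge> 1" if x: "x \<in> K" for x
  proof (rule ccontr)
    assume "\<not> radius N x (orbit T x) \<ge> 1"
    then have r: "1 - radius N x (orbit T x) > 0" by simp
    obtain M0 where M0: "\<And>m. m \<ge> M0 \<Longrightarrow> u m \<in> orbit T x" using orbit_tail[of x] by blast
    obtain m where m: "m \<ge> M0" "N (x - u m) > 1 - (1 - radius N x (orbit T x))"
      using d2[OF x r, of M0] by blast
    have "N (x - u m) \<le> radius N x (orbit T x)"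
      unfolding radius_def using M0[OF m(1)] bdd[OF x] by (intro cSup_upper) auto
    then show False using m(2) by simp
  qed
  have rad_u: "radius N (u n) (orbit T (u n)) \<le> 1" for n
    unfolding radius_def
  proof (rule cSup_least)
    show "(\<lambda>y. N (u n - y)) ` orbit T (u n) \<noteq> {}" using orbit_ne by auto
    fix z assume "z \<in> (\<lambda>y. N (u n - y)) ` orbit T (u n)"
    then obtain k where "z = N (u n - (T^^k) (u n))" unfolding orbit_def by auto
    then show "z \<le> 1" using d1 iter_u by simp
  qed
  have TK: "T ` K \<subseteq> K" using Tr uK by (metis image_subsetI rangeE)
  have nk: "\<not> kannan N K T"
  proof
    assume "kannan N K T"
    then have "N (T xa - T (u 0)) \<le> (N (xa - T xa) + N (u 0 - T (u 0))) / 2"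
      unfolding kannan_def using xa(1) uK by blast
    moreover have "T xa = u 0" using xa(2) unfolding T_def by simp
    ultimately show False using Tu[of 0] xa(3) by (simp add: norm_minus_commute) 
  qed
  have ok: "orbitally_kannan N K T"
    unfolding orbitally_kannan_def
  proof (intro ballI)
    fix x y assume x: "x \<in> K" and y: "y \<in> K"
    obtain i j where "T x = u i" "T y = u j" using Tr by (metis rangeE)
    then have "N (T x - T y) \<le> 1" using d1 by simp
    then show "N (T x - T y) \<le> (radius N x (orbit T x) + radius N y (orbit T y)) / 2"
      using rad_ge[OF x] rad_ge[OF y] by simp
  qed
  have dim: "diminishes_orbit_radius N K T"
    unfolding diminishes_orbit_radius_def
  proof
    fix x assume x: "x \<in> K"
    obtain i where "T x = u i" using Tr by (metis rangeE)
    then show "radius N (T x) (orbit T (T x)) \<le> radius N x (orbit T x)"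
      using rad_u[of i] rad_ge[OF x] by simp
  qed
  have fpf: "\<forall>x\<in>K. T x \<noteq> x"
  proof (intro ballI notI)
    fix x assume "x \<in> K" "T x = x"
    show False
    proof (cases "x \<in> range u")
      case True
      then obtain n where "x = u n" by auto
      then show False using \<open>T x = x\<close> Tu[of n] inj by (metis injD n_not_Suc_n)
    next
      case False
      then show False using \<open>T x = x\<close> Tr by metis
    qed
  qed
  have nt: "\<exists>x\<in>K. \<exists>y\<in>K. x \<noteq> y"
    using uK[of 0] uK[of 1] inj by (metis injD zero_neq_one)
  show ?thesis
    unfolding has_fpf_orbitally_kannan_example_def
    using KV nt cvx cpt TK nk ok dim fpf by blast
qed

definition unitv :: "nat \<Rightarrow> nat \<Rightarrow> real" where
  "unitv n = (\<lambda>k. if k = n then 1 else 0)"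

lemma unitv_Simp: "unitv n \<in> Simp"
  unfolding Simp_def unitv_def by (auto simp: sum.delta)

lemma half_unitv_Simp: "(1/2::real) *\<^sub>R unitv n \<in> Simp"
  unfolding Simp_def unitv_def by (auto simp flip: sum_divide_distrib simp: sum.delta)

lemma Simp_convex: "convex Simp"
  unfolding convex_def
proof (intro ballI allI impI)
  fix x y :: "nat \<Rightarrow> real" and u v :: real
  assume x: "x \<in> Simp" and y: "y \<in> Simp" and uv: "0 \<le> u" "0 \<le> v" "u + v = 1"
  show "u *\<^sub>R x + v *\<^sub>R y \<in> Simp"
    unfolding Simp_def
  proof (intro CollectI conjI allI)
    fix n show "0 \<le> (u *\<^sub>R x + v *\<^sub>R y) n" using x y uv by (simp add: Simp_def)
  next
    fix M
    have "(\<Sum>n<M. (u *\<^sub>R x + v *\<^sub>R y) n) = u * (\<Sum>n<M. x n) + v * (\<Sum>n<M. y n)"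
      by (simp add: sum.distrib sum_distrib_left)
    also have "\<dots> \<le> u * 1 + v * 1"
      using x y uv by (intro add_mono mult_left_mono) (auto simp: Simp_def)
    finally show "(\<Sum>n<M. (u *\<^sub>R x + v *\<^sub>R y) n) \<le> 1" using uv by simp
  qed
qed

lemma example_from_simplex:
  fixes g :: "(nat \<Rightarrow> real) \<Rightarrow> 'a::real_vector"
  assumes add: "\<And>x y. x \<in> V \<Longrightarrow> y \<in> V \<Longrightarrow> x + y \<in> V"
    and scl: "\<And>r x. x \<in> V \<Longrightarrow> r *\<^sub>R x \<in> V"
    and N0: "\<And>x. x \<in> V \<Longrightarrow> 0 \<le> N x"
    and g1: "\<And>t. t \<in> Simp \<Longrightarrow> g t \<in> V"
    and gaff: "\<And>t t' a. t \<in> Simp \<Longrightarrow> t' \<in> Simp \<Longrightarrow> 0 \<le> a \<Longrightarrow> a \<le> 1 \<Longrightarrow>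
                 g (a *\<^sub>R t + (1 - a) *\<^sub>R t') = a *\<^sub>R g t + (1 - a) *\<^sub>R g t'"
    and h2: "\<And>t. t \<in> Simp \<Longrightarrow> (\<lambda>M. N (g t - (\<Sum>n<M. t n *\<^sub>R g (unitv n)))) \<longlonglongrightarrow> 0"
    and h3: "\<And>F. finite F \<Longrightarrow> N (\<Sum>k\<in>F. g (unitv k)) \<le> c * sqrt (card F)"
    and inj: "inj (\<lambda>n. g (unitv n))"
    and d1: "\<And>i j. N (g (unitv i) - g (unitv j)) \<le> 1"
    and d2: "\<And>t \<epsilon> M. t \<in> Simp \<Longrightarrow> \<epsilon> > 0 \<Longrightarrow> \<exists>m\<ge>M. N (g t - g (unitv m)) > 1 - \<epsilon>"
    and d3: "\<And>t. t \<in> Simp \<Longrightarrow> \<exists>B. \<forall>m. N (g t - g (unitv m)) \<le> B"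
    and x0: "tz \<in> Simp" "g tz \<notin> range (\<lambda>n. g (unitv n))"
            "N (g tz - g (unitv 0)) < N (g (unitv 0) - g (unitv 1))"
  shows "has_fpf_orbitally_kannan_example V N"
proof (rule example_from_seq[where K = "g ` Simp" and u = "\<lambda>n. g (unitv n)" and xa = "g tz"])
  show "g ` Simp \<subseteq> V" using g1 by blast
  have z: "0 \<in> V" using scl[OF g1[OF unitv_Simp[of 0]], of 0] by simp
  show "convex (g ` Simp)"
    unfolding convex_alt
  proof (intro ballI allI impI)
    fix x y and a :: real assume "x \<in> g ` Simp" "y \<in> g ` Simp" and a: "0 \<le> a \<and> a \<le> 1"
    then obtain t t' where t: "t \<in> Simp" "t' \<in> Simp" "x = g t" "y = g t'" by blast
    have "(1 - a) *\<^sub>R t + a *\<^sub>R t' \<in> Simp"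
      using Simp_convex t a unfolding convex_alt by blast
    moreover have "g ((1 - a) *\<^sub>R t + a *\<^sub>R t') = (1 - a) *\<^sub>R x + a *\<^sub>R y"
      using gaff[OF t(1) t(2), of "1 - a"] a t by simp
    ultimately show "(1 - a) *\<^sub>R x + a *\<^sub>R y \<in> g ` Simp" by (metis image_eqI)
  qed
  show "compactin (weak_topology V N) (g ` Simp)"
  proof (rule compactin_weak_image[OF Simp_compact])
    show "g ` Simp \<subseteq> V" using g1 by blast
    fix \<phi> assume phi: "\<phi> \<in> bdd_lin_functionals V N"
    have vV: "g (unitv n) \<in> V" for n using g1 unitv_Simp by blast
    have a0: "(\<lambda>n. \<phi> (g (unitv n))) \<longlonglongrightarrow> 0"
      by (rule weakly_null[OF phi add z N0 vV h3])
    show "continuous_map (subtopology PT Simp) euclideanreal (\<lambda>t. \<phi> (g t))"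
      by (rule cont_series[OF phi add scl z N0 vV g1 h2 a0])
  qed
  show "\<And>n. g (unitv n) \<in> g ` Simp" using unitv_Simp by blast
  show "inj (\<lambda>n. g (unitv n))" by (rule inj)
  show "\<And>i j. N (g (unitv i) - g (unitv j)) \<le> 1" by (rule d1)
  show "\<And>x \<epsilon> M. x \<in> g ` Simp \<Longrightarrow> 0 < \<epsilon> \<Longrightarrow> \<exists>m\<ge>M. 1 - \<epsilon> < N (x - g (unitv m))"
    using d2 by blast
  show "\<And>x. x \<in> g ` Simp \<Longrightarrow> \<exists>B. \<forall>m. N (x - g (unitv m)) \<le> B" using d3 by blast
  show "g tz \<in> g ` Simp" using x0 by blast
qed (use x0 in auto)

lemma fsum_apply: "(\<Sum>k\<in>F. f k) x = (\<Sum>k\<in>F. f k x)"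
  by (induction F rule: infinite_finite_induct) auto

lemma Simp_nonneg: "t \<in> Simp \<Longrightarrow> 0 \<le> t n"
  by (simp add: Simp_def)

lemma Simp_summable: "t \<in> Simp \<Longrightarrow> summable t"
  by (rule summableI_nonneg_bounded[where x=1]) (auto simp: Simp_def)

lemma Simp_lim0: "t \<in> Simp \<Longrightarrow> t \<longlonglongrightarrow> 0"
  by (rule summable_LIMSEQ_zero[OF Simp_summable])

lemma Simp_suminf_le1: "t \<in> Simp \<Longrightarrow> suminf t \<le> 1"
  by (rule suminf_le_const[OF Simp_summable]) (auto simp: Simp_def)

lemma unitv_sum_apply: "(\<Sum>n<M. t n *\<^sub>R unitv n) k = (if k < M then t k else 0)"
proof -
  have eqf: "(\<lambda>n. t n * (if k = n then 1 else 0)) = (\<lambda>n. if k = n then t n else 0)" by auto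
  have "(\<Sum>n<M. t n *\<^sub>R unitv n) k = (\<Sum>n<M. t n * (if k = n then 1 else 0))"
    by (simp add: fsum_apply unitv_def)
  also have "\<dots> = (\<Sum>n<M. (if k = n then t n else 0))" by (simp only: eqf)
  also have "\<dots> = (if k < M then t k else 0)" by (simp add: sum.delta)
  finally show ?thesis .
qed

lemma unitv_fsum_apply: "finite F \<Longrightarrow> (\<Sum>n\<in>F. unitv n) k = (if k \<in> F then 1 else 0)"
  by (simp add: fsum_apply unitv_def)

lemma c0_bdd: "x \<in> c0 \<Longrightarrow> bdd_above (range (\<lambda>n. \<bar>x n\<bar>))"
proof -
  assume "x \<in> c0"
  then have "Bseq x" unfolding c0_def by (intro convergent_imp_Bseq) (auto simp: convergent_def)
  then obtain K where "\<And>n. norm (x n) \<le> K" unfolding Bseq_def by auto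
  then show ?thesis by (intro bdd_aboveI[of _ K]) auto
qed

lemma sup_le: "(\<And>n. \<bar>x n\<bar> \<le> B) \<Longrightarrow> sup_norm_seq x \<le> B"
  unfolding sup_norm_seq_def by (rule cSup_least) auto

lemma sup_ge: "bdd_above (range (\<lambda>n. \<bar>x n\<bar>)) \<Longrightarrow> \<bar>x n\<bar> \<le> sup_norm_seq x"
  unfolding sup_norm_seq_def by (rule cSup_upper) auto

lemma sup_ge_bdd:
  assumes "\<And>n. \<bar>x n\<bar> \<le> B" shows "\<bar>x n\<bar> \<le> sup_norm_seq x"
proof (rule sup_ge)
  show "bdd_above (range (\<lambda>n. \<bar>x n\<bar>))" using assms by (intro bdd_aboveI2) auto
qed

lemma sup_nonneg:
  assumes "\<And>n. \<bar>x n\<bar> \<le> B" shows "0 \<le> sup_norm_seq x"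
  using sup_ge_bdd[of x B 0] assms by (meson abs_ge_zero order_trans)

lemma Simp_c0: "t \<in> Simp \<Longrightarrow> t \<in> c0"
  unfolding c0_def using Simp_lim0 by blast

lemma tail_to_0:
  assumes "t \<longlonglongrightarrow> 0"
  shows "(\<lambda>M. sup_norm_seq (\<lambda>k. if k < M then 0 else t k)) \<longlonglongrightarrow> 0"
  unfolding LIMSEQ_iff
proof (intro allI impI)
  fix r :: real assume r: "r > 0"
  obtain M0 where M0: "\<And>k. k \<ge> M0 \<Longrightarrow> \<bar>t k\<bar> < r/2"
    using assms r unfolding LIMSEQ_iff by (metis half_gt_zero real_norm_def diff_zero)
  have "norm (sup_norm_seq (\<lambda>k. if k < M then 0 else t k) - 0) < r" if M: "M \<ge> M0" for M
  proof -
    have b: "\<bar>(if k < M then 0 else t k)\<bar> \<le> r/2" for k using M0[of k] M r by auto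
    have "sup_norm_seq (\<lambda>k. if k < M then 0 else t k) \<le> r/2" by (rule sup_le[OF b])
    moreover have "0 \<le> sup_norm_seq (\<lambda>k. if k < M then 0 else t k)" by (rule sup_nonneg[OF b])
    ultimately show ?thesis using r by simp
  qed
  then show "\<exists>no. \<forall>n\<ge>no. norm (sup_norm_seq (\<lambda>k. if k < n then 0 else t k) - 0) < r" by blast
qed

lemma c0_example: "has_fpf_orbitally_kannan_example c0 sup_norm_seq"
proof (rule example_from_simplex[where g = "\<lambda>t. t" and c = 1 and tz = "(1/2::real) *\<^sub>R unitv 0"])
  show "\<And>x y. x \<in> c0 \<Longrightarrow> y \<in> c0 \<Longrightarrow> x + y \<in> c0"
    unfolding c0_def using tendsto_add[of _ 0 sequentially _ 0] by (auto simp: plus_fun_def)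
  show "\<And>r x. x \<in> c0 \<Longrightarrow> r *\<^sub>R x \<in> c0"
  proof -
    fix r x assume "x \<in> c0"
    then have "x \<longlonglongrightarrow> 0" by (simp add: c0_def)
    then have "(\<lambda>n. r *\<^sub>R x n) \<longlonglongrightarrow> r *\<^sub>R 0" by (intro tendsto_intros)
    then show "r *\<^sub>R x \<in> c0" by (simp add: c0_def scaleR_fun_def)
  qed
  show "\<And>x. x \<in> c0 \<Longrightarrow> 0 \<le> sup_norm_seq x"
    using c0_bdd sup_ge by (metis abs_ge_zero order_trans)
  show "\<And>t. t \<in> Simp \<Longrightarrow> t \<in> c0" by (rule Simp_c0)
  show "\<And>t t' a. a *\<^sub>R t + (1 - a) *\<^sub>R t' = a *\<^sub>R t + (1 - a) *\<^sub>R t'" by simp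
  show "(\<lambda>M. sup_norm_seq (t - (\<Sum>n<M. t n *\<^sub>R unitv n))) \<longlonglongrightarrow> 0" if t: "t \<in> Simp" for t
  proof -
    have "t - (\<Sum>n<M. t n *\<^sub>R unitv n) = (\<lambda>k. if k < M then 0 else t k)" for M
      by (rule ext) (simp add: unitv_sum_apply)
    then show ?thesis using tail_to_0[OF Simp_lim0[OF t]] by simp
  qed
  show "sup_norm_seq (\<Sum>k\<in>F. unitv k) \<le> 1 * sqrt (card F)" if F: "finite F" for F
  proof (cases "F = {}")
    case True
    then show ?thesis by (simp add: sup_norm_seq_def)
  next
    case False
    then have "card F \<ge> 1" using F by (simp add: Suc_le_eq card_gt_0_iff)
    then have "1 \<le> sqrt (card F)" by simp
    moreover have "sup_norm_seq (\<Sum>k\<in>F. unitv k) \<le> 1"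
      by (rule sup_le) (simp add: unitv_fsum_apply[OF F])
    ultimately show ?thesis by linarith
  qed
  show "inj unitv"
  proof (rule injI)
    fix i j assume "unitv i = unitv j"
    then have "unitv i i = unitv j i" by simp
    then show "i = j" by (simp add: unitv_def split: if_splits)
  qed
  show "sup_norm_seq (unitv i - unitv j) \<le> 1" for i j
    by (rule sup_le) (simp add: unitv_def)
  show "\<exists>m\<ge>M. 1 - \<epsilon> < sup_norm_seq (t - unitv m)" if t: "t \<in> Simp" and e: "\<epsilon> > 0" for t \<epsilon> M
  proof -
    obtain M0 where M0: "\<And>k. k \<ge> M0 \<Longrightarrow> \<bar>t k\<bar> < \<epsilon>"
      using Simp_lim0[OF t] e unfolding LIMSEQ_iff by (metis real_norm_def diff_zero)
    let ?m = "max M M0"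
    have b: "\<bar>(t - unitv ?m) k\<bar> \<le> 1" for k using Simp_nonneg[OF t] Simp_le1[OF t] by (simp add: unitv_def)
    have "\<bar>(t - unitv ?m) ?m\<bar> \<le> sup_norm_seq (t - unitv ?m)" by (rule sup_ge_bdd[OF b])
    moreover have "\<bar>(t - unitv ?m) ?m\<bar> > 1 - \<epsilon>" using M0[of ?m] by (simp add: unitv_def)
    ultimately show ?thesis by (intro exI[of _ ?m]) auto
  qed
  show "\<exists>B. \<forall>m. sup_norm_seq (t - unitv m) \<le> B" if t: "t \<in> Simp" for t
    using Simp_nonneg[OF t] Simp_le1[OF t]
    by (intro exI[of _ 1] allI sup_le) (simp add: unitv_def)
  show "(1/2::real) *\<^sub>R unitv 0 \<in> Simp" by (rule half_unitv_Simp)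
  show "(1/2::real) *\<^sub>R unitv 0 \<notin> range unitv"
  proof
    assume "(1/2::real) *\<^sub>R unitv 0 \<in> range unitv"
    then obtain n where "(1/2::real) *\<^sub>R unitv 0 = unitv n" by auto
    then have "((1/2::real) *\<^sub>R unitv 0) 0 = unitv n 0" by simp
    then show False by (simp add: unitv_def split: if_splits)
  qed
  have "sup_norm_seq ((1/2::real) *\<^sub>R unitv 0 - unitv 0) \<le> 1/2"
    by (rule sup_le) (simp add: unitv_def)
  moreover have "1 \<le> sup_norm_seq (unitv 0 - unitv 1)"
    using sup_ge_bdd[of "unitv 0 - unitv 1" 1 0] by (simp add: unitv_def)
  ultimately show "sup_norm_seq ((1/2::real) *\<^sub>R unitv 0 - unitv 0) < sup_norm_seq (unitv 0 - unitv 1)"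
    by simp
qed

lemma unitv_sums: "unitv i sums 1"
  using sums_single[of i "\<lambda>_. 1::real"] by (simp add: unitv_def)

lemma sq_le_abs: "\<bar>a::real\<bar> \<le> 1 \<Longrightarrow> a\<^sup>2 \<le> \<bar>a\<bar>"
proof -
  assume "\<bar>a\<bar> \<le> 1"
  then have "\<bar>a\<bar> * \<bar>a\<bar> \<le> 1 * \<bar>a\<bar>" by (intro mult_right_mono) auto
  then show ?thesis by (simp add: power2_eq_square abs_mult_self_eq)
qed

lemma l2_le:
  assumes A: "\<And>k. \<bar>y k\<bar> \<le> A" and yz: "\<And>k. (y k)\<^sup>2 \<le> z k" and z: "summable z"
  shows "norm_l2_new y \<le> max A (sqrt (suminf z) / sqrt 2)"
proof -
  have "sup_norm_seq y \<le> A" by (rule sup_le[OF A])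
  moreover have "summable (\<lambda>k. (y k)\<^sup>2)"
    by (rule summable_comparison_test'[OF z, of 0]) (use yz in auto)
  then have "(\<Sum>k. (y k)\<^sup>2) \<le> suminf z" by (intro suminf_le yz z)
  then have "l2_norm_seq y \<le> sqrt (suminf z)" unfolding l2_norm_seq_def by simp
  then have "l2_norm_seq y / sqrt 2 \<le> sqrt (suminf z) / sqrt 2" by (simp add: divide_right_mono)
  ultimately show ?thesis unfolding norm_l2_new_def by (meson max.mono)
qed

lemma l2_ge_sup: "sup_norm_seq y \<le> norm_l2_new y"
  unfolding norm_l2_new_def by simp

lemma l2_closed_add: "x \<in> l2 \<Longrightarrow> y \<in> l2 \<Longrightarrow> x + y \<in> l2"
proof -
  assume x: "x \<in> l2" and y: "y \<in> l2"
  have "summable (\<lambda>k. 2 * (x k)\<^sup>2 + 2 * (y k)\<^sup>2)"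
    using x y unfolding l2_def by (intro summable_add summable_mult) auto
  then show "x + y \<in> l2" unfolding l2_def mem_Collect_eq
  proof (rule summable_comparison_test'[where N=0])
    fix n
    have e: "(x n + y n)\<^sup>2 = 2 * (x n)\<^sup>2 + 2 * (y n)\<^sup>2 - (x n - y n)\<^sup>2"
      by (simp add: power2_eq_square algebra_simps)
    have "0 \<le> (x n - y n)\<^sup>2" by simp
    then have "(x n + y n)\<^sup>2 \<le> 2 * (x n)\<^sup>2 + 2 * (y n)\<^sup>2" using e by linarith
    then show "norm (((x + y) n)\<^sup>2) \<le> 2 * (x n)\<^sup>2 + 2 * (y n)\<^sup>2" by simp
  qed
qed

lemma l2_closed_scale: "x \<in> l2 \<Longrightarrow> r *\<^sub>R x \<in> l2"
  unfolding l2_def by (simp add: power_mult_distrib summable_mult)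

lemma l2_nonneg: "x \<in> l2 \<Longrightarrow> 0 \<le> norm_l2_new x"
proof -
  assume "x \<in> l2"
  then have "0 \<le> (\<Sum>n. (x n)\<^sup>2)" unfolding l2_def by (intro suminf_nonneg) auto
  then have "0 \<le> l2_norm_seq x / sqrt 2" unfolding l2_norm_seq_def by simp
  then show ?thesis unfolding norm_l2_new_def by linarith
qed

lemma Simp_l2: "t \<in> Simp \<Longrightarrow> t \<in> l2"
  unfolding l2_def
proof (intro CollectI summable_comparison_test'[OF Simp_summable, of t 0])
  fix n assume t: "t \<in> Simp"
  have "t n * t n \<le> 1 * t n" using Simp_nonneg[OF t] Simp_le1[OF t] by (intro mult_right_mono) auto
  then show "norm ((t n)\<^sup>2) \<le> t n" by (simp add: power2_eq_square)
qed auto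

lemma tail_sums_to_0:
  assumes "summable t"
  shows "(\<lambda>M. suminf (\<lambda>k. if k < M then 0 else t k)) \<longlonglongrightarrow> (0::real)"
proof -
  have "(\<lambda>k. if k < M then 0 else t k) sums (suminf t - (\<Sum>k<M. t k))" for M
  proof -
    have "(\<lambda>k. if k \<in> {..<M} then t k else 0) sums (\<Sum>k<M. t k)" by (rule sums_If_finite_set) auto
    from sums_diff[OF summable_sums[OF assms] this]
    have "(\<lambda>k. t k - (if k \<in> {..<M} then t k else 0)) sums (suminf t - (\<Sum>k<M. t k))" .
    moreover have "(\<lambda>k. t k - (if k \<in> {..<M} then t k else 0)) = (\<lambda>k. if k < M then 0 else t k)"
      by auto
    ultimately show ?thesis by simp
  qed
  then have "suminf (\<lambda>k. if k < M then 0 else t k) = suminf t - (\<Sum>k<M. t k)" for M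
    by (rule sums_unique[symmetric])
  moreover have "(\<lambda>M. suminf t - (\<Sum>k<M. t k)) \<longlonglongrightarrow> suminf t - suminf t"
    by (intro tendsto_intros summable_LIMSEQ assms)
  ultimately show ?thesis by simp
qed

lemma l2_example: "has_fpf_orbitally_kannan_example l2 norm_l2_new"
proof (rule example_from_simplex[where g = "\<lambda>t. t" and c = 1 and tz = "(1/2::real) *\<^sub>R unitv 0"])
  show "\<And>x y. x \<in> l2 \<Longrightarrow> y \<in> l2 \<Longrightarrow> x + y \<in> l2" by (rule l2_closed_add)
  show "\<And>r x. x \<in> l2 \<Longrightarrow> r *\<^sub>R x \<in> l2" by (rule l2_closed_scale)
  show "\<And>x. x \<in> l2 \<Longrightarrow> 0 \<le> norm_l2_new x" by (rule l2_nonneg)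
  show "\<And>t. t \<in> Simp \<Longrightarrow> t \<in> l2" by (rule Simp_l2)
  show "\<And>t t' a. a *\<^sub>R t + (1 - a) *\<^sub>R t' = a *\<^sub>R t + (1 - a) *\<^sub>R t'" by simp
  show "(\<lambda>M. norm_l2_new (t - (\<Sum>n<M. t n *\<^sub>R unitv n))) \<longlonglongrightarrow> 0" if t: "t \<in> Simp" for t
  proof -
    define y where "y M = (\<lambda>k. if k < M then 0 else t k)" for M
    have yeq: "t - (\<Sum>n<M. t n *\<^sub>R unitv n) = y M" for M
      unfolding y_def by (rule ext) (simp add: unitv_sum_apply)
    have yb: "\<bar>y M k\<bar> \<le> 1" for M k using Simp_nonneg[OF t] Simp_le1[OF t] by (simp add: y_def)
    have ysq: "(y M k)\<^sup>2 \<le> y M k" for M k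
    proof -
      have "y M k * y M k \<le> 1 * y M k" using Simp_nonneg[OF t] Simp_le1[OF t]
        by (intro mult_right_mono) (auto simp: y_def)
      then show ?thesis by (simp add: power2_eq_square)
    qed
    have ysum: "summable (y M)" for M
      by (rule summable_comparison_test'[OF Simp_summable[OF t], where N=0]) 
         (use Simp_nonneg[OF t] in \<open>auto simp: y_def\<close>)
    have up: "norm_l2_new (y M) \<le> max (sup_norm_seq (y M)) (sqrt (suminf (y M)) / sqrt 2)" for M
      by (rule l2_le[OF sup_ge_bdd[OF yb] ysq ysum])
    have yl2: "y M \<in> l2" for M
      unfolding l2_def mem_Collect_eq
      by (rule summable_comparison_test'[OF ysum[of M], where N=0]) (use ysq in auto)
    have lo: "0 \<le> norm_l2_new (y M)" for M by (rule l2_nonneg[OF yl2])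
    have "(\<lambda>M. max (sup_norm_seq (y M)) (sqrt (suminf (y M)) / sqrt 2)) \<longlonglongrightarrow> max 0 (sqrt 0 / sqrt 2)"
    proof (intro tendsto_max tendsto_divide tendsto_real_sqrt tendsto_const)
      show "(\<lambda>M. sup_norm_seq (y M)) \<longlonglongrightarrow> 0" unfolding y_def by (rule tail_to_0[OF Simp_lim0[OF t]])
      show "(\<lambda>M. suminf (y M)) \<longlonglongrightarrow> 0" unfolding y_def by (rule tail_sums_to_0[OF Simp_summable[OF t]])
    qed simp
    then have lim: "(\<lambda>M. max (sup_norm_seq (y M)) (sqrt (suminf (y M)) / sqrt 2)) \<longlonglongrightarrow> 0" by simp
    have "(\<lambda>M. norm_l2_new (y M)) \<longlonglongrightarrow> 0"
    proof (rule tendsto_sandwich[OF _ _ tendsto_const lim])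
      show "\<forall>\<^sub>F n in sequentially. 0 \<le> norm_l2_new (y n)" using lo by (intro always_eventually) auto
      show "\<forall>\<^sub>F n in sequentially. norm_l2_new (y n) \<le> max (sup_norm_seq (y n)) (sqrt (suminf (y n)) / sqrt 2)"
        using up by (intro always_eventually) auto
    qed
    then show ?thesis by (simp add: yeq)
  qed
  show "norm_l2_new (\<Sum>k\<in>F. unitv k) \<le> 1 * sqrt (card F)" if F: "finite F" for F
  proof (cases "F = {}")
    case True
    then show ?thesis by (simp add: norm_l2_new_def sup_norm_seq_def l2_norm_seq_def)
  next
    case False
    then have c1: "card F \<ge> 1" using F by (simp add: Suc_le_eq card_gt_0_iff)
    define y where "y = (\<lambda>k. if k \<in> F then 1 else (0::real))"
    have yeq: "(\<Sum>k\<in>F. unitv k) = y" unfolding y_def by (rule ext) (simp add: unitv_fsum_apply[OF F])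
    have ys: "y sums (real (card F))" unfolding y_def using sums_If_finite_set[OF F, of "\<lambda>_. 1::real"] by simp
    have "norm_l2_new y \<le> max 1 (sqrt (suminf y) / sqrt 2)"
      by (rule l2_le[where z=y]) (use ys in \<open>auto simp: y_def sums_summable\<close>)
    also have "\<dots> = max 1 (sqrt (card F) / sqrt 2)" using sums_unique[OF ys] by simp
    also have "\<dots> \<le> sqrt (card F)"
    proof -
      have "1 \<le> sqrt (card F)" using c1 by simp
      moreover have "sqrt (card F) / sqrt 2 \<le> sqrt (card F)"
      proof -
        have "sqrt (card F) * 1 \<le> sqrt (card F) * sqrt 2" by (intro mult_left_mono) auto
        then show ?thesis by (simp add: divide_le_eq)
      qed
      ultimately show ?thesis by simp
    qed
    finally show ?thesis by (simp add: yeq)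
  qed
  show "inj unitv"
  proof (rule injI)
    fix i j assume "unitv i = unitv j"
    then have "unitv i i = unitv j i" by simp
    then show "i = j" by (simp add: unitv_def split: if_splits)
  qed
  show "norm_l2_new (unitv i - unitv j) \<le> 1" for i j
  proof -
    have "norm_l2_new (unitv i - unitv j) \<le> max 1 (sqrt (suminf (unitv i + unitv j)) / sqrt 2)"
    proof (rule l2_le)
      show "summable (unitv i + unitv j)" unfolding plus_fun_def
        by (intro summable_add sums_summable[OF unitv_sums])
    qed (auto simp: unitv_def)
    also have "suminf (unitv i + unitv j) = 2"
      using sums_unique[OF sums_add[OF unitv_sums[of i] unitv_sums[of j]]] by (simp add: plus_fun_def)
    finally have "norm_l2_new (unitv i - unitv j) \<le> max 1 (sqrt 2 / sqrt 2)" .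
    moreover have "max 1 (sqrt 2 / sqrt 2) = (1::real)" by simp
    ultimately show ?thesis by linarith
  qed
  show "\<exists>m\<ge>M. 1 - \<epsilon> < norm_l2_new (t - unitv m)" if t: "t \<in> Simp" and e: "\<epsilon> > 0" for t \<epsilon> M
  proof -
    obtain M0 where M0: "\<And>k. k \<ge> M0 \<Longrightarrow> \<bar>t k\<bar> < \<epsilon>"
      using Simp_lim0[OF t] e unfolding LIMSEQ_iff by (metis real_norm_def diff_zero)
    let ?m = "max M M0"
    have b: "\<bar>(t - unitv ?m) k\<bar> \<le> 1" for k using Simp_nonneg[OF t] Simp_le1[OF t] by (simp add: unitv_def)
    have "\<bar>(t - unitv ?m) ?m\<bar> \<le> sup_norm_seq (t - unitv ?m)" by (rule sup_ge_bdd[OF b])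
    moreover have "\<bar>(t - unitv ?m) ?m\<bar> > 1 - \<epsilon>" using M0[of ?m] by (simp add: unitv_def)
    ultimately show ?thesis using l2_ge_sup[of "t - unitv ?m"] by (intro exI[of _ ?m]) auto
  qed
  show "\<exists>B. \<forall>m. norm_l2_new (t - unitv m) \<le> B" if t: "t \<in> Simp" for t
  proof (intro exI allI)
    fix m
    have "norm_l2_new (t - unitv m) \<le> max 1 (sqrt (suminf (t + unitv m)) / sqrt 2)"
    proof (rule l2_le)
      show "\<bar>(t - unitv m) k\<bar> \<le> 1" for k using Simp_nonneg[OF t] Simp_le1[OF t] by (simp add: unitv_def)
      show "summable (t + unitv m)" unfolding plus_fun_def
        by (intro summable_add Simp_summable[OF t] sums_summable[OF unitv_sums])
      show "((t - unitv m) k)\<^sup>2 \<le> (t + unitv m) k" for k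
      proof -
        have "((t - unitv m) k)\<^sup>2 \<le> \<bar>(t - unitv m) k\<bar>"
          by (rule sq_le_abs) (use Simp_nonneg[OF t] Simp_le1[OF t] in \<open>simp add: unitv_def\<close>)
        also have "\<dots> \<le> (t + unitv m) k" using Simp_nonneg[OF t, of k] by (simp add: unitv_def abs_le_iff)
        finally show ?thesis .
      qed
    qed
    also have "suminf (t + unitv m) \<le> 2"
    proof -
      have "suminf (t + unitv m) = suminf t + 1"
        using sums_unique[OF sums_add[OF summable_sums[OF Simp_summable[OF t]] unitv_sums[of m]]]
        by (simp add: plus_fun_def)
      then show ?thesis using Simp_suminf_le1[OF t] by simp
    qed
    then have "max 1 (sqrt (suminf (t + unitv m)) / sqrt 2) \<le> max 1 (sqrt 2 / sqrt 2)"
      by (intro max.mono divide_right_mono real_sqrt_le_mono) auto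
    finally show "norm_l2_new (t - unitv m) \<le> max 1 (sqrt 2 / sqrt 2)" .
  qed
  show "(1/2::real) *\<^sub>R unitv 0 \<in> Simp" by (rule half_unitv_Simp)
  show "(1/2::real) *\<^sub>R unitv 0 \<notin> range unitv"
  proof
    assume "(1/2::real) *\<^sub>R unitv 0 \<in> range unitv"
    then obtain n where "(1/2::real) *\<^sub>R unitv 0 = unitv n" by auto
    then have "((1/2::real) *\<^sub>R unitv 0) 0 = unitv n 0" by simp
    then show False by (simp add: unitv_def split: if_splits)
  qed
  have "norm_l2_new ((1/2::real) *\<^sub>R unitv 0 - unitv 0) \<le> max (1/2) (sqrt (suminf ((1/4::real) *\<^sub>R unitv 0)) / sqrt 2)"
  proof (rule l2_le)
    show "summable ((1/4::real) *\<^sub>R unitv 0)" unfolding scaleR_fun_def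
      by (intro summable_scaleR_right sums_summable[OF unitv_sums])
  qed (auto simp: unitv_def power2_eq_square)
  also have "suminf ((1/4::real) *\<^sub>R unitv 0) = 1/4"
    using sums_unique[OF sums_scaleR_right[OF unitv_sums[of 0], of "1/4"]] by (simp add: scaleR_fun_def)
  also have "sqrt (1/4) = 1/2" by (simp add: real_sqrt_divide)
  also have "max (1/2) ((1/2) / sqrt 2) = (1/2::real)" by (simp add: divide_le_eq)
  finally have a: "norm_l2_new ((1/2::real) *\<^sub>R unitv 0 - unitv 0) \<le> 1/2" .
  have b: "\<bar>(unitv 0 - unitv 1) n\<bar> \<le> 1" for n by (simp add: unitv_def)
  have "1 \<le> norm_l2_new (unitv 0 - unitv 1)"
  proof -
    have "\<bar>(unitv 0 - unitv 1) 0\<bar> \<le> sup_norm_seq (unitv 0 - unitv 1)" by (rule sup_ge_bdd[OF b])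
    moreover have "(unitv 0 - unitv 1) 0 = 1" by (simp add: unitv_def)
    ultimately show ?thesis using l2_ge_sup[of "unitv 0 - unitv 1"] by linarith
  qed
  then show "norm_l2_new ((1/2::real) *\<^sub>R unitv 0 - unitv 0) < norm_l2_new (unitv 0 - unitv 1)"
    using a by simp
qed

definition tent :: "nat \<Rightarrow> real \<Rightarrow> real" where
  "tent n s = max 0 (1 - \<bar>2^(n+2) * s - 3\<bar>)"

definition peak :: "nat \<Rightarrow> real" where
  "peak n = 3 / 2^(n+2)"

lemma tent_nonneg: "0 \<le> tent n s" unfolding tent_def by simp

lemma tent_le1: "tent n s \<le> 1" unfolding tent_def by simp

lemma tent_pos_aux: "max 0 (1 - \<bar>x - 3\<bar>) > (0::real) \<Longrightarrow> 2 < x \<and> x < 4"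
  by (auto simp: max_def abs_if split: if_splits)

lemma tent_pos: "tent n s > 0 \<Longrightarrow> 2 < 2^(n+2) * s \<and> 2^(n+2) * s < 4"
  unfolding tent_def by (rule tent_pos_aux)

lemma tent_disj:
  assumes "tent j s > 0" "tent k s > 0" shows "j = k"
proof (rule ccontr)
  assume "j \<noteq> k"
  then consider "j < k" | "k < j" by linarith
  then show False
  proof cases
    case 1
    have "(2::real)^(k+2) = 2^(k-j) * 2^(j+2)" using 1 by (simp flip: power_add)
    moreover have "(2::real)^(k-j) \<ge> 2" using 1
      by (metis One_nat_def diff_is_0_eq' linorder_not_le power_increasing_iff power_one_right one_less_numeral_iff semiring_norm(76) Suc_leI zero_less_diff)
    moreover have "s > 0" using tent_pos[OF assms(1)] by (metis zero_less_mult_pos zero_less_numeral zero_less_power order.strict_trans)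
    ultimately have "2^(k+2) * s \<ge> 2 * (2^(j+2) * s)" by (simp add: mult.assoc mult_right_mono)
    then show False using tent_pos[OF assms(1)] tent_pos[OF assms(2)] by linarith
  next
    case 2
    have "(2::real)^(j+2) = 2^(j-k) * 2^(k+2)" using 2 by (simp flip: power_add)
    moreover have "(2::real)^(j-k) \<ge> 2" using 2
      by (metis One_nat_def diff_is_0_eq' linorder_not_le power_increasing_iff power_one_right one_less_numeral_iff semiring_norm(76) Suc_leI zero_less_diff)
    moreover have "s > 0" using tent_pos[OF assms(1)] by (metis zero_less_mult_pos zero_less_numeral zero_less_power order.strict_trans)
    ultimately have "2^(j+2) * s \<ge> 2 * (2^(k+2) * s)" by (simp add: mult.assoc mult_right_mono)
    then show False using tent_pos[OF assms(1)] tent_pos[OF assms(2)] by linarith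
  qed
qed

lemma tent_peak: "tent n (peak n) = 1"
  unfolding tent_def peak_def by simp

lemma peak_in: "peak n \<in> {0..1}"
proof -
  have "(4::real) \<le> 2^(n+2)"
    using power_increasing[of 2 "n+2" "2::real"] by simp
  then show ?thesis unfolding peak_def by (simp add: divide_le_eq del: power_Suc)
qed

lemma tent_peak_other: "k \<noteq> n \<Longrightarrow> tent k (peak n) = 0"
  using tent_disj[of k "peak n" n] tent_peak[of n] tent_nonneg[of k "peak n"] by force

lemma tent_out: "s \<notin> {0..1} \<Longrightarrow> tent n s = 0"
proof -
  assume s: "s \<notin> {0..1}"
  show ?thesis
  proof (rule ccontr)
    assume "tent n s \<noteq> 0"
    then have "tent n s > 0" using tent_nonneg[of n s] by linarith
    from tent_pos[OF this] have a: "2 < 2^(n+2) * s" "2^(n+2) * s < 4" by auto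
    have p: "(4::real) \<le> 2^(n+2)" using power_increasing[of 2 "n+2" "2::real"] by simp
    from s consider "s < 0" | "s > 1" by force
    then show False
    proof cases
      case 1 then have "2^(n+2) * s < 0" by (simp add: mult_pos_neg)
      then show False using a by linarith
    next
      case 2 then have "2^(n+2) * s \<ge> 4 * 1" using p by (intro mult_mono) auto
      then show False using a by linarith
    qed
  qed
qed

lemma tent_cont: "continuous_on A (tent n)"
  unfolding tent_def by (intro continuous_intros)

definition G :: "(nat \<Rightarrow> real) \<Rightarrow> real \<Rightarrow> real" where
  "G t = (\<lambda>s. \<Sum>n. t n * tent n s)"

lemma G_term_bound: "t \<in> Simp \<Longrightarrow> norm (t n * tent n s) \<le> t n"
proof -
  assume t: "t \<in> Simp"
  have "\<bar>t n * tent n s\<bar> = t n * tent n s" using Simp_nonneg[OF t] tent_nonneg by simp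
  also have "\<dots> \<le> t n * 1" using Simp_nonneg[OF t] tent_le1 by (intro mult_left_mono) auto
  finally show ?thesis by simp
qed

lemma G_summ: "t \<in> Simp \<Longrightarrow> summable (\<lambda>n. t n * tent n s)"
  by (rule summable_comparison_test'[OF Simp_summable, where N=0]) (use G_term_bound in auto)

lemma G_summ_abs: "t \<in> Simp \<Longrightarrow> summable (\<lambda>n. \<bar>t n * tent n s\<bar>)"
  by (rule summable_comparison_test'[OF Simp_summable, where N=0]) (use G_term_bound in auto)

lemma suminf_tail: "summable (a::nat \<Rightarrow> real) \<Longrightarrow> suminf (\<lambda>k. if k < M then 0 else a k) = suminf a - (\<Sum>k<M. a k)"
proof -
  assume a: "summable a"
  have "(\<lambda>k. if k \<in> {..<M} then a k else 0) sums (\<Sum>k<M. a k)" by (rule sums_If_finite_set) auto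
  from sums_diff[OF summable_sums[OF a] this]
  have "(\<lambda>k. a k - (if k \<in> {..<M} then a k else 0)) sums (suminf a - (\<Sum>k<M. a k))" .
  moreover have "(\<lambda>k. a k - (if k \<in> {..<M} then a k else 0)) = (\<lambda>k. if k < M then 0 else a k)"
    by auto
  ultimately show ?thesis by (simp add: sums_unique[symmetric])
qed

lemma tail_le:
  assumes t: "t \<in> Simp"
  shows "\<bar>G t s - (\<Sum>n<M. t n * tent n s)\<bar> \<le> suminf (\<lambda>k. if k < M then 0 else t k)"
proof -
  let ?b = "\<lambda>k. if k < M then 0 else t k * tent k s"
  have "G t s - (\<Sum>n<M. t n * tent n s) = suminf ?b"
    unfolding G_def using suminf_tail[OF G_summ[OF t, of s], of M] by simp
  also have "\<bar>\<dots>\<bar> \<le> (\<Sum>k. \<bar>?b k\<bar>)"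
  proof (rule summable_rabs)
    show "summable (\<lambda>k. \<bar>?b k\<bar>)"
      by (rule summable_comparison_test'[OF Simp_summable[OF t], where N=0]) (use G_term_bound[OF t] Simp_nonneg[OF t] in auto)
  qed
  also have "\<dots> \<le> suminf (\<lambda>k. if k < M then 0 else t k)"
  proof (rule suminf_le)
    show "summable (\<lambda>k. \<bar>?b k\<bar>)"
      by (rule summable_comparison_test'[OF Simp_summable[OF t], where N=0]) (use G_term_bound[OF t] Simp_nonneg[OF t] in auto)
    show "summable (\<lambda>k. if k < M then 0 else t k)"
      by (rule summable_comparison_test'[OF Simp_summable[OF t], where N=0]) (use Simp_nonneg[OF t] in auto)
    show "\<bar>?b k\<bar> \<le> (if k < M then 0 else t k)" for k using G_term_bound[OF t, of k s] by auto
  qed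
  finally show ?thesis .
qed

lemma G_abs_le: "t \<in> Simp \<Longrightarrow> \<bar>G t s\<bar> \<le> 1"
  using tail_le[of t s 0] Simp_suminf_le1[of t] by simp

lemma G_C01: "t \<in> Simp \<Longrightarrow> G t \<in> C01"
proof -
  assume t: "t \<in> Simp"
  have "uniform_limit {0..1} (\<lambda>n s. \<Sum>i<n. t i * tent i s) (\<lambda>s. suminf (\<lambda>i. t i * tent i s)) sequentially"
    by (rule Weierstrass_m_test[OF _ Simp_summable[OF t]]) (rule G_term_bound[OF t])
  then have "continuous_on {0..1} (G t)"
    unfolding G_def
    by (rule uniform_limit_theorem[rotated]) (auto intro!: always_eventually continuous_intros tent_cont)
  moreover have "G t s = 0" if "s \<notin> {0..1}" for s
    unfolding G_def using tent_out[OF that] by simp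
  ultimately show ?thesis unfolding C01_def by blast
qed

lemma G_single: "(\<And>k. k \<noteq> n \<Longrightarrow> t k = 0) \<Longrightarrow> G t s = t n * tent n s"
proof -
  assume h: "\<And>k. k \<noteq> n \<Longrightarrow> t k = 0"
  have "(\<lambda>k. t k * tent k s) = (\<lambda>k. if k = n then t k * tent k s else 0)" using h by auto
  then show ?thesis unfolding G_def using sums_unique[OF sums_single[of n "\<lambda>k. t k * tent k s"]] by simp
qed

lemma G_peak: "G t (peak m) = t m"
proof -
  have "(\<lambda>k. t k * tent k (peak m)) = (\<lambda>k. if k = m then t k else 0)"
    using tent_peak_other tent_peak by auto
  then show ?thesis unfolding G_def using sums_unique[OF sums_single[of m t]] by simp
qed

lemma G_unitv: "G (unitv n) = tent n"
  by (rule ext) (simp add: G_single[of n] unitv_def)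

lemma G_half: "G ((1/2::real) *\<^sub>R unitv 0) = (\<lambda>s. (1/2) * tent 0 s)"
  by (rule ext) (simp add: G_single[of 0] unitv_def)

lemma G_aff:
  assumes t: "t \<in> Simp" and t': "t' \<in> Simp"
  shows "G (a *\<^sub>R t + (1 - a) *\<^sub>R t') = a *\<^sub>R G t + (1 - a) *\<^sub>R G t'"
proof (rule ext)
  fix s
  have "G (a *\<^sub>R t + (1 - a) *\<^sub>R t') s = (\<Sum>n. a * (t n * tent n s) + (1 - a) * (t' n * tent n s))"
    unfolding G_def by (simp add: algebra_simps)
  also have "\<dots> = (\<Sum>n. a * (t n * tent n s)) + (\<Sum>n. (1 - a) * (t' n * tent n s))"
    by (intro suminf_add[symmetric] summable_mult G_summ t t')
  also have "\<dots> = a * G t s + (1 - a) * G t' s"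
    unfolding G_def by (simp add: suminf_mult G_summ t t')
  finally show "G (a *\<^sub>R t + (1 - a) *\<^sub>R t') s = (a *\<^sub>R G t + (1 - a) *\<^sub>R G t') s" by simp
qed

lemma nC_le: "(\<And>s. s \<in> {0..1} \<Longrightarrow> \<bar>f s\<bar> \<le> B) \<Longrightarrow> norm_C01 f \<le> B"
  unfolding norm_C01_def by (rule cSup_least) auto

lemma nC_ge:
  assumes "\<And>s. s \<in> {0..1} \<Longrightarrow> \<bar>f s\<bar> \<le> B" "s \<in> {0..1}"
  shows "\<bar>f s\<bar> \<le> norm_C01 f"
  unfolding norm_C01_def
proof (rule cSup_upper)
  show "bdd_above ((\<lambda>t. \<bar>f t\<bar>) ` {0..1})" using assms(1) by (intro bdd_aboveI2) auto
qed (use assms in auto)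

lemma nC_nonneg: "f \<in> C01 \<Longrightarrow> 0 \<le> norm_C01 f"
proof -
  assume f: "f \<in> C01"
  then have "continuous_on {0..1} (\<lambda>s. \<bar>f s\<bar>)" unfolding C01_def by (auto intro: continuous_intros)
  then have "compact ((\<lambda>s. \<bar>f s\<bar>) ` {0..1})" by (intro compact_continuous_image) auto
  then have "bdd_above ((\<lambda>s. \<bar>f s\<bar>) ` {0..1})" by (intro bounded_imp_bdd_above compact_imp_bounded)
  then have "\<bar>f 0\<bar> \<le> norm_C01 f" unfolding norm_C01_def by (intro cSup_upper) auto
  then show ?thesis by linarith
qed

lemma tent_sum_le1:
  assumes F: "finite F" shows "(\<Sum>k\<in>F. tent k s) \<le> 1"
proof -
  define P where "P = {k\<in>F. tent k s \<noteq> 0}"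
  have PF: "P \<subseteq> F" and Pf: "finite P" using F by (auto simp: P_def)
  have "(\<Sum>k\<in>F. tent k s) = (\<Sum>k\<in>P. tent k s)"
    by (rule sum.mono_neutral_right[OF F PF]) (auto simp: P_def)
  also have "\<dots> \<le> of_nat (card P) * 1"
    by (rule sum_bounded_above) (simp add: tent_le1)
  also have "card P \<le> Suc 0"
    unfolding card_le_Suc0_iff_eq[OF Pf]
  proof (intro ballI)
    fix a b assume "a \<in> P" "b \<in> P"
    then have "tent a s > 0" "tent b s > 0" using tent_nonneg[of a s] tent_nonneg[of b s]
      by (auto simp: P_def)
    then show "a = b" by (rule tent_disj)
  qed
  finally show ?thesis by simp
qed

lemma C01_example: "has_fpf_orbitally_kannan_example C01 norm_C01"
proof (rule example_from_simplex[where g = G and c = 1 and tz = "(1/2::real) *\<^sub>R unitv 0"])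
  show "\<And>x y. x \<in> C01 \<Longrightarrow> y \<in> C01 \<Longrightarrow> x + y \<in> C01"
    unfolding C01_def plus_fun_def by (auto intro: continuous_on_add)
  show "\<And>r x. x \<in> C01 \<Longrightarrow> r *\<^sub>R x \<in> C01"
    unfolding C01_def scaleR_fun_def by (auto intro: continuous_on_mult_left)
  show "\<And>x. x \<in> C01 \<Longrightarrow> 0 \<le> norm_C01 x" by (rule nC_nonneg)
  show "\<And>t. t \<in> Simp \<Longrightarrow> G t \<in> C01" by (rule G_C01)
  show "\<And>t t' a. t \<in> Simp \<Longrightarrow> t' \<in> Simp \<Longrightarrow> 0 \<le> a \<Longrightarrow> a \<le> 1 \<Longrightarrow>
          G (a *\<^sub>R t + (1 - a) *\<^sub>R t') = a *\<^sub>R G t + (1 - a) *\<^sub>R G t'" by (rule G_aff)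
  show "(\<lambda>M. norm_C01 (G t - (\<Sum>n<M. t n *\<^sub>R G (unitv n)))) \<longlonglongrightarrow> 0" if t: "t \<in> Simp" for t
  proof -
    define b where "b M = suminf (\<lambda>k. if k < M then 0 else t k)" for M
    have fe: "(G t - (\<Sum>n<M. t n *\<^sub>R G (unitv n))) s = G t s - (\<Sum>n<M. t n * tent n s)" for M s
      by (simp add: fsum_apply G_unitv)
    have bd: "\<bar>(G t - (\<Sum>n<M. t n *\<^sub>R G (unitv n))) s\<bar> \<le> b M" for M s
      unfolding fe b_def by (rule tail_le[OF t])
    have up: "norm_C01 (G t - (\<Sum>n<M. t n *\<^sub>R G (unitv n))) \<le> b M" for M
      by (rule nC_le) (rule bd)
    have lo: "0 \<le> norm_C01 (G t - (\<Sum>n<M. t n *\<^sub>R G (unitv n)))" for M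
      using nC_ge[of "G t - (\<Sum>n<M. t n *\<^sub>R G (unitv n))" "b M" 0] bd by force
    have lim: "b \<longlonglongrightarrow> 0" unfolding b_def by (rule tail_sums_to_0[OF Simp_summable[OF t]])
    show ?thesis
    proof (rule tendsto_sandwich[OF _ _ tendsto_const lim])
      show "\<forall>\<^sub>F n in sequentially. 0 \<le> norm_C01 (G t - (\<Sum>n<n. t n *\<^sub>R G (unitv n)))"
        using lo by (intro always_eventually) auto
      show "\<forall>\<^sub>F n in sequentially. norm_C01 (G t - (\<Sum>n<n. t n *\<^sub>R G (unitv n))) \<le> b n"
        using up by (intro always_eventually) auto
    qed
  qed
  show "norm_C01 (\<Sum>k\<in>F. G (unitv k)) \<le> 1 * sqrt (card F)" if F: "finite F" for F
  proof (cases "F = {}")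
    case True
    then show ?thesis by (simp add: nC_le)
  next
    case False
    then have c1: "card F \<ge> 1" using F by (simp add: Suc_le_eq card_gt_0_iff)
    then have "1 \<le> sqrt (card F)" by simp
    moreover have "norm_C01 (\<Sum>k\<in>F. G (unitv k)) \<le> 1"
    proof (rule nC_le)
      fix s
      have "(\<Sum>k\<in>F. G (unitv k)) s = (\<Sum>k\<in>F. tent k s)" by (simp add: fsum_apply G_unitv)
      moreover have "0 \<le> (\<Sum>k\<in>F. tent k s)" by (intro sum_nonneg tent_nonneg)
      ultimately show "\<bar>(\<Sum>k\<in>F. G (unitv k)) s\<bar> \<le> 1" using tent_sum_le1[OF F, of s] by simp
    qed
    ultimately show ?thesis by linarith
  qed
  show "inj (\<lambda>n. G (unitv n))"
  proof (rule injI)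
    fix i j assume "G (unitv i) = G (unitv j)"
    then have "tent i (peak i) = tent j (peak i)" by (simp add: G_unitv)
    then have "tent j (peak i) > 0" using tent_peak[of i] by simp
    then show "i = j" using tent_disj[of i "peak i" j] tent_peak[of i] by simp
  qed
  show "norm_C01 (G (unitv i) - G (unitv j)) \<le> 1" for i j
  proof (rule nC_le)
    fix s
    show "\<bar>(G (unitv i) - G (unitv j)) s\<bar> \<le> 1"
      using tent_le1[of i s] tent_le1[of j s] tent_nonneg[of i s] tent_nonneg[of j s]
      by (simp add: G_unitv abs_le_iff)
  qed
  have bd2: "\<bar>(G t - G (unitv m)) s\<bar> \<le> 2" if t: "t \<in> Simp" for t m s
  proof -
    have "\<bar>G t s\<bar> \<le> 1" by (rule G_abs_le[OF t])
    then show ?thesis using tent_nonneg[of m s] tent_le1[of m s] by (simp add: G_unitv abs_le_iff)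
  qed
  show "\<exists>m\<ge>M. 1 - \<epsilon> < norm_C01 (G t - G (unitv m))" if t: "t \<in> Simp" and e: "\<epsilon> > 0" for t \<epsilon> M
  proof -
    obtain M0 where M0: "\<And>k. k \<ge> M0 \<Longrightarrow> \<bar>t k\<bar> < \<epsilon>"
      using Simp_lim0[OF t] e unfolding LIMSEQ_iff by (metis real_norm_def diff_zero)
    let ?m = "max M M0"
    have "\<bar>(G t - G (unitv ?m)) (peak ?m)\<bar> \<le> norm_C01 (G t - G (unitv ?m))"
      by (rule nC_ge[OF bd2[OF t] peak_in])
    moreover have "(G t - G (unitv ?m)) (peak ?m) = t ?m - 1" by (simp add: G_peak G_unitv tent_peak)
    moreover have "\<bar>t ?m\<bar> < \<epsilon>" using M0[of ?m] by simp
    ultimately have h: "\<bar>t ?m - 1\<bar> \<le> norm_C01 (G t - G (unitv ?m))" "\<bar>t ?m\<bar> < \<epsilon>" by simp_all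
    have "1 - \<epsilon> < \<bar>t ?m - 1\<bar>" using h(2) e by (auto simp: abs_if split: if_splits)
    then have "1 - \<epsilon> < norm_C01 (G t - G (unitv ?m))" using h(1) by linarith
    then show ?thesis by (intro exI[of _ ?m]) auto
  qed
  show "\<exists>B. \<forall>m. norm_C01 (G t - G (unitv m)) \<le> B" if t: "t \<in> Simp" for t
    using bd2[OF t] by (intro exI[of _ 2] allI nC_le) auto
  show "(1/2::real) *\<^sub>R unitv 0 \<in> Simp" by (rule half_unitv_Simp)
  show "G ((1/2::real) *\<^sub>R unitv 0) \<notin> range (\<lambda>n. G (unitv n))"
  proof
    assume "G ((1/2::real) *\<^sub>R unitv 0) \<in> range (\<lambda>n. G (unitv n))"
    then obtain n where "(\<lambda>s. (1/2) * tent 0 s) = tent n" by (auto simp: G_half G_unitv)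
    then have "(1/2) * tent 0 (peak n) = tent n (peak n)" by metis
    then show False using tent_peak[of n] tent_le1[of 0 "peak n"] by simp
  qed
  have a: "norm_C01 (G ((1/2::real) *\<^sub>R unitv 0) - G (unitv 0)) \<le> 1/2"
    by (rule nC_le) (use tent_nonneg[of 0] tent_le1[of 0] in \<open>simp add: G_half G_unitv\<close>)
  have "\<bar>(G (unitv 0) - G (unitv 1)) (peak 0)\<bar> \<le> norm_C01 (G (unitv 0) - G (unitv 1))"
  proof (rule nC_ge[OF _ peak_in])
    show "\<bar>(G (unitv 0) - G (unitv 1)) s\<bar> \<le> 1" for s
      using tent_nonneg[of 0 s] tent_le1[of 0 s] tent_nonneg[of 1 s] tent_le1[of 1 s]
      by (simp add: G_unitv abs_le_iff)
  qed
  moreover have "(G (unitv 0) - G (unitv 1)) (peak 0) = 1"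
    using tent_peak[of 0] tent_peak_other[of 1 0] by (simp add: G_unitv)
  ultimately show "norm_C01 (G ((1/2::real) *\<^sub>R unitv 0) - G (unitv 0)) < norm_C01 (G (unitv 0) - G (unitv 1))"
    using a by simp
qed

abbreviation M01 :: "real measure" where "M01 \<equiv> lebesgue_on {0..1}"

lemma fm01: "finite_measure M01"
  by (rule finite_measureI) (simp add: emeasure_restrict_space)

lemma meas01: "(f::real\<Rightarrow>real) \<in> borel_measurable borel \<Longrightarrow> f \<in> borel_measurable M01"
  by (metis measurable_lborel2 measurable_restrict_space1 measurable_completion)

lemma integrable01: "f \<in> borel_measurable M01 \<Longrightarrow> (\<And>s. s \<in> {0..1} \<Longrightarrow> \<bar>f s\<bar> \<le> B) \<Longrightarrow> integrable M01 (f::real\<Rightarrow>real)"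
  by (rule finite_measure.integrable_const_bound[OF fm01, where B=B]) (auto intro!: AE_I2)

lemma LH:
  fixes f :: "real \<Rightarrow> real"
  assumes "integrable M01 f" "(f has_integral c) {0..1::real}"
  shows "integral\<^sup>L M01 f = c"
  using has_integral_integral_lebesgue_on[OF assms(1)] assms(2) has_integral_unique by auto

lemma step_integral_aux:
  fixes h :: "int \<Rightarrow> real" and L :: nat
  assumes L: "L > 0" and K: "K \<le> L"
  shows "((\<lambda>s. h \<lfloor>real L * s\<rfloor>) has_integral (\<Sum>m<K. h (int m)) / real L) {0..real K / real L}"
  using K
proof (induction K)
  case 0
  then show ?case using has_integral_refl(2)[of "\<lambda>s. h \<lfloor>real L * s\<rfloor>" 0] by simp
next
  case (Suc K)
  have IH: "((\<lambda>s. h \<lfloor>real L * s\<rfloor>) has_integral (\<Sum>m<K. h (int m)) / real L) {0..real K / real L}"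
    using Suc by simp
  have "((\<lambda>s. h (int K)) has_integral (measure lborel {real K / real L..real (Suc K) / real L} *\<^sub>R h (int K))) {real K / real L..real (Suc K) / real L}"
    by (rule has_integral_const_real)
  moreover have "measure lborel {real K / real L..real (Suc K) / real L} = 1 / real L"
    using L by (simp add: divide_simps)
  ultimately have c: "((\<lambda>s. h (int K)) has_integral h (int K) / real L) {real K / real L..real (Suc K) / real L}"
    by simp
  have c2: "((\<lambda>s. h \<lfloor>real L * s\<rfloor>) has_integral h (int K) / real L) {real K / real L..real (Suc K) / real L}"
  proof (rule has_integral_spike_finite[OF _ _ c])
    show "finite {real (Suc K) / real L}" by simp
    fix s assume s: "s \<in> {real K / real L..real (Suc K) / real L} - {real (Suc K) / real L}"
    then have "real K \<le> real L * s" "real L * s < real K + 1" using L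
      by (auto simp: field_simps)
    then have "\<lfloor>real L * s\<rfloor> = int K" by linarith
    then show "h \<lfloor>real L * s\<rfloor> = h (int K)" by simp
  qed
  have "((\<lambda>s. h \<lfloor>real L * s\<rfloor>) has_integral ((\<Sum>m<K. h (int m)) / real L + h (int K) / real L)) {0..real (Suc K) / real L}"
    by (rule has_integral_combine[OF _ _ IH c2]) (use L in \<open>auto simp: divide_right_mono\<close>)
  then show ?case by (simp add: add_divide_distrib)
qed

lemma step_integral:
  fixes h :: "int \<Rightarrow> real" and L :: nat
  assumes L: "L > 0"
  shows "((\<lambda>s. h \<lfloor>real L * s\<rfloor>) has_integral (\<Sum>m<L. h (int m)) / real L) {0..1}"
  using step_integral_aux[OF L order.refl, of h] L by simp

definition sgn_par :: "int \<Rightarrow> real" where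
  "sgn_par m = (if even m then 1 else -1)"

definition rad :: "nat \<Rightarrow> real \<Rightarrow> real" where
  "rad n s = sgn_par \<lfloor>2^(n+1) * s\<rfloor>"

lemma sgn_par_meas [measurable]: "sgn_par \<in> measurable (count_space UNIV) borel"
  by simp

lemma rad_borel: "rad n \<in> borel_measurable borel"
  unfolding rad_def by measurable

lemma rad_meas [measurable]: "rad n \<in> borel_measurable M01"
  by (rule meas01[OF rad_borel])

lemma rad_sq: "rad n s * rad n s = 1"
  by (simp add: rad_def sgn_par_def)

lemma rad_abs: "\<bar>rad n s\<bar> = 1"
  by (simp add: rad_def sgn_par_def)

lemma pair_sum: "(\<Sum>m<2*K. f m) = (\<Sum>p<K. f (2*p) + f (2*p+1))" for K :: nat and f :: "nat \<Rightarrow> real"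
  by (induction K) (simp_all add: algebra_simps)

lemma rad_orth_has_integral:
  assumes ij: "i < j"
  shows "((\<lambda>s. rad i s * rad j s) has_integral 0) {0..1}"
proof -
  define d where "d = j - i"
  have d: "d \<ge> 1" "j + 1 = (i + 1) + d" using ij by (auto simp: d_def)
  define h where "h m = sgn_par (m div 2^d) * sgn_par m" for m :: int
  have eq: "rad i s * rad j s = h \<lfloor>real (2^(j+1)) * s\<rfloor>" for s
  proof -
    have "(2::real)^(i+1) * s = (2^(j+1) * s) / real_of_int (2^d)"
      using d by (simp add: power_add)
    then have "\<lfloor>(2::real)^(i+1) * s\<rfloor> = \<lfloor>2^(j+1) * s\<rfloor> div 2^d"
      using floor_divide_real_eq_div[of "2^d" "2^(j+1) * s"] by simp
    then show ?thesis unfolding rad_def h_def by simp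
  qed
  have hpair: "h (int (2*p)) + h (int (2*p+1)) = 0" for p
  proof -
    obtain q where q: "(2::int)^d = 2 * q" "q > 0"
      using d by (metis One_nat_def Suc_le_D power_Suc zero_less_numeral zero_less_power
          pos_imp_zdiv_pos_iff mult_pos_pos zero_less_mult_pos)
    have "int (2*p+1) div (2 * q) = (int (2*p+1) div 2) div q"
      using q(2) zdiv_zmult2_eq[of q "int (2*p+1)" 2] by simp
    also have "int (2*p+1) div 2 = int p" by simp
    finally have a: "int (2*p+1) div 2^d = int p div q" unfolding q(1) .
    have "int (2*p) div (2 * q) = (int (2*p) div 2) div q"
      using q(2) zdiv_zmult2_eq[of q "int (2*p)" 2] by simp
    also have "int (2*p) div 2 = int p" by simp
    finally have b: "int (2*p) div 2^d = int p div q" unfolding q(1) .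
    show ?thesis using a b unfolding h_def by (simp add: sgn_par_def)
  qed
  have "(\<Sum>m<2^(j+1). h (int m)) = 0"
  proof -
    have "(\<Sum>m<2^(j+1). h (int m)) = (\<Sum>m<2*2^j. h (int m))" by simp
    also have "\<dots> = (\<Sum>p<2^j. h (int (2*p)) + h (int (2*p+1)))" by (rule pair_sum)
    also have "\<dots> = 0" using hpair by simp
    finally show ?thesis .
  qed
  moreover have "((\<lambda>s. h \<lfloor>real (2^(j+1)) * s\<rfloor>) has_integral (\<Sum>m<2^(j+1). h (int m)) / real (2^(j+1))) {0..1}"
    by (rule step_integral) simp
  ultimately show ?thesis using eq by simp
qed

lemma rad_prod_integrable: "integrable M01 (\<lambda>s. rad i s * rad j s)"
  by (rule integrable01[where B=1]) (auto simp: abs_mult rad_abs)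

lemma rad_orth: "integral\<^sup>L M01 (\<lambda>s. rad i s * rad j s) = (if i = j then 1 else 0)"
proof (cases "i = j")
  case True
  have "((\<lambda>s. rad i s * rad j s) has_integral 1) {0..1}"
    using has_integral_const_real[of "1::real" 0 1] True by (simp add: rad_sq)
  then show ?thesis using LH[OF rad_prod_integrable] True by simp
next
  case False
  then consider "i < j" | "j < i" by linarith
  then have "((\<lambda>s. rad i s * rad j s) has_integral 0) {0..1}"
  proof cases
    case 1 then show ?thesis by (rule rad_orth_has_integral)
  next
    case 2 then show ?thesis using rad_orth_has_integral[OF 2] by (simp add: mult.commute)
  qed
  then show ?thesis using LH[OF rad_prod_integrable] False by simp
qed

definition GR :: "(nat \<Rightarrow> real) \<Rightarrow> real \<Rightarrow> real" where
  "GR t = (\<lambda>s. \<Sum>n. t n * rad n s)"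

lemma GR_term_bound: "t \<in> Simp \<Longrightarrow> norm (t n * rad n s) \<le> t n"
  using Simp_nonneg[of t n] by (simp add: abs_mult rad_abs)

lemma GR_summ: "t \<in> Simp \<Longrightarrow> summable (\<lambda>n. t n * rad n s)"
  by (rule summable_comparison_test'[OF Simp_summable, where N=0]) (use GR_term_bound in auto)

lemma tailR_le:
  assumes t: "t \<in> Simp"
  shows "\<bar>GR t s - (\<Sum>n<M. t n * rad n s)\<bar> \<le> suminf (\<lambda>k. if k < M then 0 else t k)"
proof -
  let ?b = "\<lambda>k. if k < M then 0 else t k * rad k s"
  have "GR t s - (\<Sum>n<M. t n * rad n s) = suminf ?b"
    unfolding GR_def using suminf_tail[OF GR_summ[OF t, of s], of M] by simp
  also have "\<bar>\<dots>\<bar> \<le> (\<Sum>k. \<bar>?b k\<bar>)"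
  proof (rule summable_rabs)
    show "summable (\<lambda>k. \<bar>?b k\<bar>)"
      by (rule summable_comparison_test'[OF Simp_summable[OF t], where N=0]) (use GR_term_bound[OF t] Simp_nonneg[OF t] in auto)
  qed
  also have "\<dots> \<le> suminf (\<lambda>k. if k < M then 0 else t k)"
  proof (rule suminf_le)
    show "summable (\<lambda>k. \<bar>?b k\<bar>)"
      by (rule summable_comparison_test'[OF Simp_summable[OF t], where N=0]) (use GR_term_bound[OF t] Simp_nonneg[OF t] in auto)
    show "summable (\<lambda>k. if k < M then 0 else t k)"
      by (rule summable_comparison_test'[OF Simp_summable[OF t], where N=0]) (use Simp_nonneg[OF t] in auto)
    show "\<bar>?b k\<bar> \<le> (if k < M then 0 else t k)" for k using GR_term_bound[OF t, of k s] by auto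
  qed
  finally show ?thesis .
qed

lemma GR_abs_le: "t \<in> Simp \<Longrightarrow> \<bar>GR t s\<bar> \<le> 1"
  using tailR_le[of t s 0] Simp_suminf_le1[of t] by simp

lemma GR_meas [measurable]: "t \<in> Simp \<Longrightarrow> GR t \<in> borel_measurable M01"
proof -
  assume t: "t \<in> Simp"
  show ?thesis
  proof (rule borel_measurable_LIMSEQ_real)
    show "(\<lambda>i. \<Sum>n<i. t n * rad n s) \<longlonglongrightarrow> GR t s" for s
      unfolding GR_def by (rule summable_LIMSEQ[OF GR_summ[OF t]])
    show "(\<lambda>s. \<Sum>n<i. t n * rad n s) \<in> borel_measurable M01" for i by measurable
  qed
qed

lemma GR_int: "t \<in> Simp \<Longrightarrow> integrable M01 (GR t)"
  by (rule integrable01[where B=1]) (auto simp: GR_abs_le)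

lemma rad_int: "integrable M01 (rad n)"
  by (rule integrable01[where B=1]) (auto simp: rad_abs)

lemma PS_int: "integrable M01 (\<lambda>s. \<Sum>n<M. t n * rad n s)"
  by (simp add: rad_int)

lemma int_const01: "integral\<^sup>L M01 (\<lambda>_. c) = (c::real)"
  by (simp add: measure_restrict_space)

lemma GR_single: "(\<And>k. k \<noteq> n \<Longrightarrow> t k = 0) \<Longrightarrow> GR t s = t n * rad n s"
proof -
  assume h: "\<And>k. k \<noteq> n \<Longrightarrow> t k = 0"
  have "(\<lambda>k. t k * rad k s) = (\<lambda>k. if k = n then t k * rad k s else 0)" using h by auto
  then show ?thesis unfolding GR_def using sums_unique[OF sums_single[of n "\<lambda>k. t k * rad k s"]] by simp
qed

lemma GR_unitv: "GR (unitv n) = rad n"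
  by (rule ext) (simp add: GR_single[of n] unitv_def)

lemma GR_half: "GR ((1/2::real) *\<^sub>R unitv 0) = (\<lambda>s. (1/2) * rad 0 s)"
  by (rule ext) (simp add: GR_single[of 0] unitv_def)

lemma GR_aff:
  assumes t: "t \<in> Simp" and t': "t' \<in> Simp"
  shows "GR (a *\<^sub>R t + (1 - a) *\<^sub>R t') = (\<lambda>s. a * GR t s + (1 - a) * GR t' s)"
proof (rule ext)
  fix s
  have "GR (a *\<^sub>R t + (1 - a) *\<^sub>R t') s = (\<Sum>n. a * (t n * rad n s) + (1 - a) * (t' n * rad n s))"
    unfolding GR_def by (simp add: algebra_simps)
  also have "\<dots> = (\<Sum>n. a * (t n * rad n s)) + (\<Sum>n. (1 - a) * (t' n * rad n s))"
    by (intro suminf_add[symmetric] summable_mult GR_summ t t')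
  also have "\<dots> = a * GR t s + (1 - a) * GR t' s"
    unfolding GR_def by (simp add: suminf_mult GR_summ t t')
  finally show "GR (a *\<^sub>R t + (1 - a) *\<^sub>R t') s = a * GR t s + (1 - a) * GR t' s" .
qed

lemma l1rel_refl: "integrable M01 f \<Longrightarrow> l1rel f f"
  unfolding l1rel_def by simp

lemma absL1_sum:
  assumes F: "finite F" and f: "\<And>k. k \<in> F \<Longrightarrow> integrable M01 (f k)"
  shows "(\<Sum>k\<in>F. c k *\<^sub>R abs_L1 (f k)) = abs_L1 (\<lambda>s. \<Sum>k\<in>F. c k * f k s)"
  using F f
proof (induction F rule: finite_induct)
  case empty
  then show ?case by (simp add: zero_L1_def)
next
  case (insert x F)
  have i1: "integrable M01 (\<lambda>s. c x * f x s)" using insert by simp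
  have i2: "integrable M01 (\<lambda>s. \<Sum>k\<in>F. c k * f k s)"
    using insert.prems by simp
  have "(\<Sum>k\<in>insert x F. c k *\<^sub>R abs_L1 (f k)) = c x *\<^sub>R abs_L1 (f x) + abs_L1 (\<lambda>s. \<Sum>k\<in>F. c k * f k s)"
    using insert by simp
  also have "\<dots> = abs_L1 (\<lambda>s. c x * f x s) + abs_L1 (\<lambda>s. \<Sum>k\<in>F. c k * f k s)"
    using insert by (simp add: scaleR_L1.abs_eq l1rel_refl)
  also have "\<dots> = abs_L1 (\<lambda>s. c x * f x s + (\<Sum>k\<in>F. c k * f k s))"
    by (rule plus_L1.abs_eq[OF l1rel_refl[OF i1] l1rel_refl[OF i2]])
  finally show ?case using insert by simp
qed

lemma normL1: "integrable M01 f \<Longrightarrow> norm_L1 (abs_L1 f) = integral\<^sup>L M01 (\<lambda>s. \<bar>f s\<bar>)"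
  by (rule norm_L1.abs_eq[OF l1rel_refl])

lemma minusL1: "integrable M01 f \<Longrightarrow> integrable M01 g \<Longrightarrow> abs_L1 f - abs_L1 g = abs_L1 (\<lambda>s. f s - g s)"
  by (rule minus_L1.abs_eq[OF l1rel_refl l1rel_refl])

lemma normL1_nonneg: "0 \<le> norm_L1 x"
proof (induction x rule: L1.abs_induct)
  case (1 y)
  then show ?case by (simp add: norm_L1.abs_eq)
qed

lemma rad_diff_abs: "\<bar>rad i s - rad j s\<bar> = 1 - rad i s * rad j s"
  by (simp add: rad_def sgn_par_def)

lemma sq_sum_int:
  assumes F: "finite F"
  shows "integral\<^sup>L M01 (\<lambda>s. (\<Sum>k\<in>F. rad k s)\<^sup>2) = real (card F)"
proof -
  have eq: "(\<lambda>s. (\<Sum>k\<in>F. rad k s)\<^sup>2) = (\<lambda>s. \<Sum>j\<in>F. \<Sum>k\<in>F. rad j s * rad k s)"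
    by (rule ext) (simp add: power2_eq_square sum_product)
  have "integral\<^sup>L M01 (\<lambda>s. \<Sum>j\<in>F. \<Sum>k\<in>F. rad j s * rad k s) = (\<Sum>j\<in>F. \<Sum>k\<in>F. integral\<^sup>L M01 (\<lambda>s. rad j s * rad k s))"
    by (simp add: rad_prod_integrable)
  also have "\<dots> = (\<Sum>j\<in>F. \<Sum>k\<in>F. (if j = k then 1 else 0))" by (simp add: rad_orth)
  also have "\<dots> = real (card F)" using F by simp
  finally show ?thesis unfolding eq .
qed

lemma h3L:
  assumes F: "finite F"
  shows "integral\<^sup>L M01 (\<lambda>s. \<bar>\<Sum>k\<in>F. rad k s\<bar>) \<le> sqrt (card F)"
proof (cases "F = {}")
  case True then show ?thesis by simp
next
  case False
  define c where "c = sqrt (card F)"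
  have c0: "c > 0" unfolding c_def using F False by (simp add: card_gt_0_iff)
  have cc: "c * c = card F" unfolding c_def by simp
  let ?S = "\<lambda>s. \<Sum>k\<in>F. rad k s"
  have pw: "\<bar>?S s\<bar> \<le> (?S s)\<^sup>2 * (1 / (2*c)) + c/2" for s
  proof -
    have "0 \<le> (\<bar>?S s\<bar> - c)\<^sup>2" by simp
    then have "2 * c * \<bar>?S s\<bar> \<le> (?S s)\<^sup>2 + c * c" by (simp add: power2_eq_square algebra_simps)
    then show ?thesis using c0 by (simp add: field_simps)
  qed
  have iS: "integrable M01 ?S" by (simp add: rad_int)
  have iS2: "integrable M01 (\<lambda>s. (?S s)\<^sup>2)"
    unfolding power2_eq_square by (simp add: rad_int sum_distrib_left sum_distrib_right rad_prod_integrable)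
  have "integral\<^sup>L M01 (\<lambda>s. \<bar>?S s\<bar>) \<le> integral\<^sup>L M01 (\<lambda>s. (?S s)\<^sup>2 * (1 / (2*c)) + c/2)"
    by (rule integral_mono) (use iS iS2 pw in auto)
  also have "\<dots> = integral\<^sup>L M01 (\<lambda>s. (?S s)\<^sup>2) * (1 / (2*c)) + c/2"
    using iS2 by (simp add: int_const01 measure_restrict_space)
  also have "\<dots> = c" using sq_sum_int[OF F] cc c0 by (simp add: field_simps)
  finally show ?thesis unfolding c_def .
qed

lemma d2L:
  assumes t: "t \<in> Simp" and e: "\<epsilon> > 0"
  shows "\<exists>m\<ge>M. 1 - \<epsilon> < integral\<^sup>L M01 (\<lambda>s. \<bar>GR t s - rad m s\<bar>)"
proof -
  define b where "b K = suminf (\<lambda>k. if k < K then 0 else t k)" for K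
  have "b \<longlonglongrightarrow> 0" unfolding b_def by (rule tail_sums_to_0[OF Simp_summable[OF t]])
  then obtain K where K: "\<bar>b K\<bar> < \<epsilon>" using e unfolding LIMSEQ_iff by (metis order_refl real_norm_def diff_zero)
  define m where "m = max M K"
  have pw: "1 - b K - (\<Sum>n<K. t n * (rad n s * rad m s)) \<le> \<bar>GR t s - rad m s\<bar>" for s
  proof -
    let ?P = "\<Sum>n<K. t n * rad n s"
    have "1 - ?P * rad m s = rad m s * (rad m s - ?P)" using rad_sq[of m s] by (simp add: algebra_simps)
    also have "\<dots> \<le> \<bar>rad m s * (rad m s - ?P)\<bar>" by simp
    also have "\<dots> = \<bar>?P - rad m s\<bar>" by (simp add: abs_mult rad_abs abs_minus_commute)
    finally have 1: "1 - ?P * rad m s \<le> \<bar>?P - rad m s\<bar>" .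
    have 2: "\<bar>GR t s - ?P\<bar> \<le> b K" unfolding b_def by (rule tailR_le[OF t])
    have 3: "?P * rad m s = (\<Sum>n<K. t n * (rad n s * rad m s))" by (simp add: sum_distrib_right mult.assoc)
    have "\<bar>?P - rad m s\<bar> \<le> \<bar>GR t s - rad m s\<bar> + \<bar>GR t s - ?P\<bar>" by linarith
    then show ?thesis using 1 2 3 by linarith
  qed
  have i1: "integrable M01 (\<lambda>s. 1 - b K - (\<Sum>n<K. t n * (rad n s * rad m s)))"
    by (simp add: rad_prod_integrable)
  have i2: "integrable M01 (\<lambda>s. \<bar>GR t s - rad m s\<bar>)"
    by (intro integrable_abs Bochner_Integration.integrable_diff GR_int[OF t] rad_int)
  have "integral\<^sup>L M01 (\<lambda>s. 1 - b K - (\<Sum>n<K. t n * (rad n s * rad m s))) = 1 - b K - (\<Sum>n<K. t n * integral\<^sup>L M01 (\<lambda>s. rad n s * rad m s))"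
    by (simp add: rad_prod_integrable measure_restrict_space)
  also have "(\<Sum>n<K. t n * integral\<^sup>L M01 (\<lambda>s. rad n s * rad m s)) = 0"
    by (rule sum.neutral) (auto simp: rad_orth m_def)
  finally have "integral\<^sup>L M01 (\<lambda>s. 1 - b K - (\<Sum>n<K. t n * (rad n s * rad m s))) = 1 - b K" by simp
  moreover have "integral\<^sup>L M01 (\<lambda>s. 1 - b K - (\<Sum>n<K. t n * (rad n s * rad m s))) \<le> integral\<^sup>L M01 (\<lambda>s. \<bar>GR t s - rad m s\<bar>)"
    by (rule integral_mono[OF i1 i2 pw])
  ultimately have "1 - \<epsilon> < integral\<^sup>L M01 (\<lambda>s. \<bar>GR t s - rad m s\<bar>)" using K by linarith
  then show ?thesis unfolding m_def by (intro exI[of _ "max M K"]) auto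
qed

lemma norm_rad_diff: "norm_L1 (abs_L1 (rad i) - abs_L1 (rad j)) = (if i = j then 0 else 1)"
proof -
  have "norm_L1 (abs_L1 (rad i) - abs_L1 (rad j)) = integral\<^sup>L M01 (\<lambda>s. \<bar>rad i s - rad j s\<bar>)"
    by (simp add: minusL1 rad_int normL1)
  also have "\<dots> = integral\<^sup>L M01 (\<lambda>s. 1 - rad i s * rad j s)" by (simp add: rad_diff_abs)
  also have "\<dots> = 1 - (if i = j then 1 else 0)"
    by (simp add: rad_prod_integrable measure_restrict_space rad_orth)
  finally show ?thesis by simp
qed

lemma L1_example: "has_fpf_orbitally_kannan_example (UNIV :: L1 set) norm_L1"
proof (rule example_from_simplex[where g = "\<lambda>t. abs_L1 (GR t)" and c = 1 and tz = "(1/2::real) *\<^sub>R unitv 0"])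
  show "\<And>x. x \<in> UNIV \<Longrightarrow> 0 \<le> norm_L1 x" by (rule normL1_nonneg)
  show "abs_L1 (GR (a *\<^sub>R t + (1 - a) *\<^sub>R t')) = a *\<^sub>R abs_L1 (GR t) + (1 - a) *\<^sub>R abs_L1 (GR t')"
    if t: "t \<in> Simp" "t' \<in> Simp" for t t' and a :: real
  proof -
    have i: "integrable M01 (\<lambda>s. a * GR t s)" "integrable M01 (\<lambda>s. (1 - a) * GR t' s)"
      using GR_int t by auto
    have "a *\<^sub>R abs_L1 (GR t) + (1 - a) *\<^sub>R abs_L1 (GR t') = abs_L1 (\<lambda>s. a * GR t s) + abs_L1 (\<lambda>s. (1 - a) * GR t' s)"
      using GR_int t by (simp add: scaleR_L1.abs_eq l1rel_refl)
    also have "\<dots> = abs_L1 (\<lambda>s. a * GR t s + (1 - a) * GR t' s)"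
      by (rule plus_L1.abs_eq[OF l1rel_refl[OF i(1)] l1rel_refl[OF i(2)]])
    finally show ?thesis using GR_aff[OF t] by simp
  qed
  show "(\<lambda>M. norm_L1 (abs_L1 (GR t) - (\<Sum>n<M. t n *\<^sub>R abs_L1 (GR (unitv n))))) \<longlonglongrightarrow> 0" if t: "t \<in> Simp" for t
  proof -
    define b where "b M = suminf (\<lambda>k. if k < M then 0 else t k)" for M
    have eq: "norm_L1 (abs_L1 (GR t) - (\<Sum>n<M. t n *\<^sub>R abs_L1 (GR (unitv n)))) =
        integral\<^sup>L M01 (\<lambda>s. \<bar>GR t s - (\<Sum>n<M. t n * rad n s)\<bar>)" for M
    proof -
      have "(\<Sum>n<M. t n *\<^sub>R abs_L1 (GR (unitv n))) = abs_L1 (\<lambda>s. \<Sum>n<M. t n * rad n s)"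
        unfolding GR_unitv by (rule absL1_sum) (auto simp: rad_int)
      then show ?thesis using GR_int[OF t] PS_int by (simp add: minusL1 normL1)
    qed
    have up: "integral\<^sup>L M01 (\<lambda>s. \<bar>GR t s - (\<Sum>n<M. t n * rad n s)\<bar>) \<le> b M" for M
    proof -
      have "integral\<^sup>L M01 (\<lambda>s. \<bar>GR t s - (\<Sum>n<M. t n * rad n s)\<bar>) \<le> integral\<^sup>L M01 (\<lambda>s. b M)"
      proof (rule integral_mono)
        show "integrable M01 (\<lambda>s. \<bar>GR t s - (\<Sum>n<M. t n * rad n s)\<bar>)"
          by (intro integrable_abs Bochner_Integration.integrable_diff GR_int[OF t] PS_int)
        show "integrable M01 (\<lambda>s. b M)" by (rule integrable01[where B="\<bar>b M\<bar>"]) auto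
        show "\<bar>GR t s - (\<Sum>n<M. t n * rad n s)\<bar> \<le> b M" for s unfolding b_def by (rule tailR_le[OF t])
      qed
      then show ?thesis by (simp add: measure_restrict_space)
    qed
    have lo: "0 \<le> integral\<^sup>L M01 (\<lambda>s. \<bar>GR t s - (\<Sum>n<M. t n * rad n s)\<bar>)" for M
      by (rule integral_nonneg_AE) auto
    have lim: "b \<longlonglongrightarrow> 0" unfolding b_def by (rule tail_sums_to_0[OF Simp_summable[OF t]])
    have "(\<lambda>M. integral\<^sup>L M01 (\<lambda>s. \<bar>GR t s - (\<Sum>n<M. t n * rad n s)\<bar>)) \<longlonglongrightarrow> 0"
    proof (rule tendsto_sandwich[OF _ _ tendsto_const lim])
      show "\<forall>\<^sub>F n in sequentially. 0 \<le> integral\<^sup>L M01 (\<lambda>s. \<bar>GR t s - (\<Sum>n<n. t n * rad n s)\<bar>)"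
        using lo by (intro always_eventually) auto
      show "\<forall>\<^sub>F n in sequentially. integral\<^sup>L M01 (\<lambda>s. \<bar>GR t s - (\<Sum>n<n. t n * rad n s)\<bar>) \<le> b n"
        using up by (intro always_eventually) auto
    qed
    then show ?thesis unfolding eq .
  qed
  show "norm_L1 (\<Sum>k\<in>F. abs_L1 (GR (unitv k))) \<le> 1 * sqrt (card F)" if F: "finite F" for F
  proof -
    have "(\<Sum>k\<in>F. abs_L1 (GR (unitv k))) = (\<Sum>k\<in>F. 1 *\<^sub>R abs_L1 (rad k))" by (simp add: GR_unitv)
    also have "\<dots> = abs_L1 (\<lambda>s. \<Sum>k\<in>F. 1 * rad k s)" by (rule absL1_sum[OF F]) (simp add: rad_int)
    finally have "norm_L1 (\<Sum>k\<in>F. abs_L1 (GR (unitv k))) = integral\<^sup>L M01 (\<lambda>s. \<bar>\<Sum>k\<in>F. rad k s\<bar>)"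
      by (simp add: normL1 rad_int)
    then show ?thesis using h3L[OF F] by simp
  qed
  show "inj (\<lambda>n. abs_L1 (GR (unitv n)))"
  proof (rule injI)
    fix i j assume "abs_L1 (GR (unitv i)) = abs_L1 (GR (unitv j))"
    then have "norm_L1 (abs_L1 (rad i) - abs_L1 (rad j)) = norm_L1 0" by (simp add: GR_unitv)
    also have "norm_L1 0 = 0" by (simp add: zero_L1_def normL1)
    finally show "i = j" by (simp add: norm_rad_diff split: if_splits)
  qed
  show "norm_L1 (abs_L1 (GR (unitv i)) - abs_L1 (GR (unitv j))) \<le> 1" for i j
    by (simp add: GR_unitv norm_rad_diff)
  show "\<exists>m\<ge>M. 1 - \<epsilon> < norm_L1 (abs_L1 (GR t) - abs_L1 (GR (unitv m)))" if t: "t \<in> Simp" and e: "\<epsilon> > 0" for t \<epsilon> M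
    using d2L[OF t e, of M] GR_int[OF t] by (simp add: GR_unitv minusL1 normL1 rad_int)
  show "\<exists>B. \<forall>m. norm_L1 (abs_L1 (GR t) - abs_L1 (GR (unitv m))) \<le> B" if t: "t \<in> Simp" for t
  proof (intro exI allI)
    fix m
    have "integral\<^sup>L M01 (\<lambda>s. \<bar>GR t s - rad m s\<bar>) \<le> integral\<^sup>L M01 (\<lambda>s. 2)"
    proof (rule integral_mono)
      show "integrable M01 (\<lambda>s. \<bar>GR t s - rad m s\<bar>)"
        by (intro integrable_abs Bochner_Integration.integrable_diff GR_int[OF t] rad_int)
      show "integrable M01 (\<lambda>s. 2::real)" by (rule integrable01[where B=2]) auto
      show "\<bar>GR t s - rad m s\<bar> \<le> 2" for s using GR_abs_le[OF t, of s] rad_abs[of m s] by linarith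
    qed
    then show "norm_L1 (abs_L1 (GR t) - abs_L1 (GR (unitv m))) \<le> 2"
      using GR_int[OF t] by (simp add: GR_unitv minusL1 normL1 rad_int int_const01 measure_restrict_space)
  qed
  show "(1/2::real) *\<^sub>R unitv 0 \<in> Simp" by (rule half_unitv_Simp)
  have ih: "integrable M01 (\<lambda>s. 1/2 * rad 0 s)" by (simp add: rad_int)
  have nh: "norm_L1 (abs_L1 (\<lambda>s. 1/2 * rad 0 s)) = 1/2"
    using ih by (simp add: normL1 abs_mult rad_abs int_const01 measure_restrict_space)
  show "abs_L1 (GR ((1/2::real) *\<^sub>R unitv 0)) \<notin> range (\<lambda>n. abs_L1 (GR (unitv n)))"
  proof
    assume "abs_L1 (GR ((1/2::real) *\<^sub>R unitv 0)) \<in> range (\<lambda>n. abs_L1 (GR (unitv n)))"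
    then obtain n where "abs_L1 (\<lambda>s. 1/2 * rad 0 s) = abs_L1 (rad n)" by (auto simp: GR_half GR_unitv)
    then have "norm_L1 (abs_L1 (\<lambda>s. 1/2 * rad 0 s)) = norm_L1 (abs_L1 (rad n))" by simp
    then show False using nh by (simp add: normL1 rad_int rad_abs int_const01 measure_restrict_space)
  qed
  have "norm_L1 (abs_L1 (GR ((1/2::real) *\<^sub>R unitv 0)) - abs_L1 (GR (unitv 0))) = integral\<^sup>L M01 (\<lambda>s. \<bar>1/2 * rad 0 s - rad 0 s\<bar>)"
    using ih by (simp add: GR_half GR_unitv minusL1 normL1 rad_int)
  also have "\<dots> = 1/2"
  proof -
    have "(\<lambda>s. \<bar>1/2 * rad 0 s - rad 0 s\<bar>) = (\<lambda>s. 1/2)" by (rule ext) (simp add: rad_def sgn_par_def)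
    then show ?thesis by (simp add: int_const01 measure_restrict_space)
  qed
  finally show "norm_L1 (abs_L1 (GR ((1/2::real) *\<^sub>R unitv 0)) - abs_L1 (GR (unitv 0)))
      < norm_L1 (abs_L1 (GR (unitv 0)) - abs_L1 (GR (unitv 1)))"
    by (simp add: GR_unitv norm_rad_diff)
qed simp_all

theorem corollary4p2:
  shows "has_fpf_orbitally_kannan_example (UNIV :: L1 set) norm_L1
       \<and> has_fpf_orbitally_kannan_example C01 norm_C01
       \<and> has_fpf_orbitally_kannan_example c0 sup_norm_seq
       \<and> has_fpf_orbitally_kannan_example l2 norm_l2_new"
  using L1_example C01_example c0_example l2_example by blast

end
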